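(* Let $\varepsilon>0$, $k_1,k_2\in(0,\infty)$, $\alpha=\frac{k_1-1}{k_1+1}$, $\beta=\frac{k_2-1}{k_2+1}$, and let $\mathcal{G}(x,y)$ be defined as below. Then: (i) for $y\in\mathcal{B}_0$: $x\mapsto\mathcal{G}(x,y)$ is harmonic in $\mathcal{B}_1\cup\mathcal{B}_2$ and $x\mapsto\mathcal{G}(x,y)-\log|x-y|$ is harmonic in $\mathcal{B}_0$; (ii) for $y\in\mathcal{B}_1$: $x\mapsto\mathcal{G}(x,y)$ is harmonic in $\mathcal{B}_0\cup\mathcal{B}_2$ and $x\mapsto\mathcal{G}(x,y)-\frac1{k_1}\log|x-y|$ is harmonic in $\mathcal{B}_1\setminus\{(1+\varepsilon/2,0)\}$; (iii) for $y\in\mathcal{B}_2$: $x\mapsto\mathcal{G}(x,y)$ is harmonic in $\mathcal{B}_0\cup\mathcal{B}_1$ and $x\mapsto\mathcal{G}(x,y)-\frac1{k_2}\log|x-y|$ is harmonic in $\mathcal{B}_2\setminus\{(-1-\varepsilon/2,0)\}$. Moreover, in each case, $\mathcal{G}(\cdot,y)$ and $a(x)\partial_\nu\mathcal{G}(\cdot,y)$ are continuous across $\partial\mathcal{B}_1\cup\partial\mathcal{B}_2$, i.e. their one-sided limits from $\mathcal{B}_0$ and from $\mathcal{B}_j$ agree on $\partial\mathcal{B}_j$, $j=1,2$, where $\nu$ is the unit normal to $\partial(\mathcal{B}_1\cup\mathcal{B}_2)$ and $a=k_1\chi_{\mathcal{B}_1}+k_2\chi_{\mathcal{B}_2}+\chi_{\mathcal{B}_0}$.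 (In the paper's normalization $\Delta_x\log|x-y|=\delta(x-y)$, this says $a(x)\Delta_x\mathcal{G}(x,y)=\delta(x-y)$ away from the interfaces and the excluded points, together with the transmission conditions.)
   Context: $\mathcal{B}_1=B_1(1+\varepsilon/2,0)$, $\mathcal{B}_2=B_1(-1-\varepsilon/2,0)$, $\mathcal{B}_0=\mathbb{R}^2\setminus\overline{\mathcal{B}_1\cup\mathcal{B}_2}$. $\Phi_1,\Phi_2$ are the inversions in the circles $\partial\mathcal{B}_1,\partial\mathcal{B}_2$: identifying $x$ with $z=x_1+ix_2$ and setting $a_0=1+\varepsilon/2$, $\Phi_1(z)=\frac{1}{\bar z-a_0}+a_0$, $\Phi_2(z)=\frac{1}{\bar z+a_0}-a_0$. Compositions are written by juxtaposition, e.g. $(\Phi_1\Phi_2)^l=(\Phi_1\circ\Phi_2)^{\circ l}$, with the $0$-th power the identity. Write $L(p)=\log|p-y|$. The function $\mathcal{G}$ is defined by: (1) For $y\in\mathcal{B}_0$: for $x\in\overline{\mathcal{B}}_1$, $\mathcal{G}=\frac{2}{k_1+1}\sum_{l\ge0}(\alpha\beta)^l\big(L((\Phi_1\Phi_2)^l x)-\beta L((\Phi_2\Phi_1)^l\Phi_2x)\big)$; for $x\in\mathcal{B}_0$, $\mathcal{G}=L(x)+\sum_{l\ge1}\big[(\alpha\beta)^l\big(L((\Phi_1\Phi_2)^lx)+L((\Phi_2\Phi_1)^lx)\big)-(\alpha\beta)^{l-1}\big(\beta L((\Phi_2\Phi_1)^{l-1}\Phi_2x)+\alpha L((\Phi_1\Phi_2)^{l-1}\Phi_1x)\big)\big]$;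 for $x\in\overline{\mathcal{B}}_2$, $\mathcal{G}=\frac{2}{k_2+1}\sum_{l\ge0}(\alpha\beta)^l\big(L((\Phi_2\Phi_1)^lx)-\alpha L((\Phi_1\Phi_2)^l\Phi_1x)\big)$. (2) For $y\in\mathcal{B}_1$: for $x\in\overline{\mathcal{B}}_1\setminus\{(1+\varepsilon/2,0)\}$, $\mathcal{G}=\frac1{k_1}\big(L(x)+\alpha L(\Phi_1x)\big)-\frac{4\beta}{(k_1+1)^2}\sum_{l\ge0}(\alpha\beta)^lL((\Phi_2\Phi_1)^l\Phi_2x)$; for $x\in\mathcal{B}_0$, $\mathcal{G}=\frac{2}{k_1+1}\sum_{l\ge0}(\alpha\beta)^l\big(L((\Phi_2\Phi_1)^lx)-\beta L((\Phi_2\Phi_1)^l\Phi_2x)\big)$; for $x\in\overline{\mathcal{B}}_2$, $\mathcal{G}=\frac{4}{(k_1+1)(k_2+1)}\sum_{l\ge0}(\alpha\beta)^lL((\Phi_2\Phi_1)^lx)$. (3) For $y\in\mathcal{B}_2$: for $x\in\overline{\mathcal{B}}_1$, $\mathcal{G}=\frac{4}{(k_1+1)(k_2+1)}\sum_{l\ge0}(\alpha\beta)^lL((\Phi_1\Phi_2)^lx)$; for $x\in\mathcal{B}_0$, $\mathcal{G}=\frac{2}{k_2+1}\sum_{l\ge0}(\alpha\beta)^l\big(L((\Phi_1\Phi_2)^lx)-\alpha L((\Phi_1\Phi_2)^l\Phi_1x)\big)$; for $x\in\overline{\mathcal{B}}_2\setminus\{(-1-\varepsilon/2,0)\}$, $\mathcal{G}=\frac1{k_2}\big(L(x)+\beta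 L(\Phi_2x)\big)-\frac{4\alpha}{(k_2+1)^2}\sum_{l\ge0}(\alpha\beta)^lL((\Phi_1\Phi_2)^l\Phi_1x)$. *)

theory Defs
  imports "HOL-Analysis.Analysis"
begin

text \<open>The plane R^2 is identified with the complex numbers, x = x1 + i x2.\<close>

definition a0 :: "real \<Rightarrow> real" where
  "a0 \<epsilon> = 1 + \<epsilon> / 2"

definition cen1 :: "real \<Rightarrow> complex" where
  "cen1 \<epsilon> = complex_of_real (a0 \<epsilon>)"

definition cen2 :: "real \<Rightarrow> complex" where
  "cen2 \<epsilon> = - complex_of_real (a0 \<epsilon>)"

definition Bone :: "real \<Rightarrow> complex set" where
  "Bone \<epsilon> = ball (cen1 \<epsilon>) 1"

definition Btwo :: "real \<Rightarrow> complex set" where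
  "Btwo \<epsilon> = ball (cen2 \<epsilon>) 1"

definition Bzero :: "real \<Rightarrow> complex set" where
  "Bzero \<epsilon> = UNIV - (closure (Bone \<epsilon>) \<union> closure (Btwo \<epsilon>))"

definition Phi1 :: "real \<Rightarrow> complex \<Rightarrow> complex" where
  "Phi1 \<epsilon> z = 1 / (cnj z - complex_of_real (a0 \<epsilon>)) + complex_of_real (a0 \<epsilon>)"

definition Phi2 :: "real \<Rightarrow> complex \<Rightarrow> complex" where
  "Phi2 \<epsilon> z = 1 / (cnj z + complex_of_real (a0 \<epsilon>)) - complex_of_real (a0 \<epsilon>)"

definition contrast :: "real \<Rightarrow> real" where
  "contrast k = (k - 1) / (k + 1)"

definition Lg :: "complex \<Rightarrow> complex \<Rightarrow> real" where
  "Lg y p = ln (cmod (p - y))"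

definition Gfun :: "real \<Rightarrow> real \<Rightarrow> real \<Rightarrow> complex \<Rightarrow> complex \<Rightarrow> real" where
  "Gfun \<epsilon> k1 k2 x y =
    (let \<alpha> = contrast k1; \<beta> = contrast k2;
         P12 = (\<lambda>l. (Phi1 \<epsilon> \<circ> Phi2 \<epsilon>) ^^ l);
         P21 = (\<lambda>l. (Phi2 \<epsilon> \<circ> Phi1 \<epsilon>) ^^ l);
         L = Lg y
     in
     if y \<in> Bzero \<epsilon> then
       (if x \<in> closure (Bone \<epsilon>) then
          2 / (k1 + 1) * (\<Sum>l. (\<alpha> * \<beta>) ^ l *
              (L (P12 l x) - \<beta> * L (P21 l (Phi2 \<epsilon> x))))
        else if x \<in> Bzero \<epsilon> then
          L x + (\<Sum>m. let l = Suc m in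
              (\<alpha> * \<beta>) ^ l * (L (P12 l x) + L (P21 l x))
              - (\<alpha> * \<beta>) ^ (l - 1) * (\<beta> * L (P21 (l - 1) (Phi2 \<epsilon> x))
                                       + \<alpha> * L (P12 (l - 1) (Phi1 \<epsilon> x))))
        else if x \<in> closure (Btwo \<epsilon>) then
          2 / (k2 + 1) * (\<Sum>l. (\<alpha> * \<beta>) ^ l *
              (L (P21 l x) - \<alpha> * L (P12 l (Phi1 \<epsilon> x))))
        else 0)
     else if y \<in> Bone \<epsilon> then
       (if x \<in> closure (Bone \<epsilon>) then
          1 / k1 * (L x + \<alpha> * L (Phi1 \<epsilon> x))
          - 4 * \<beta> / (k1 + 1)^2 * (\<Sum>l. (\<alpha> * \<beta>) ^ l * L (P21 l (Phi2 \<epsilon> x)))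
        else if x \<in> Bzero \<epsilon> then
          2 / (k1 + 1) * (\<Sum>l. (\<alpha> * \<beta>) ^ l *
              (L (P21 l x) - \<beta> * L (P21 l (Phi2 \<epsilon> x))))
        else if x \<in> closure (Btwo \<epsilon>) then
          4 / ((k1 + 1) * (k2 + 1)) * (\<Sum>l. (\<alpha> * \<beta>) ^ l * L (P21 l x))
        else 0)
     else if y \<in> Btwo \<epsilon> then
       (if x \<in> closure (Bone \<epsilon>) then
          4 / ((k1 + 1) * (k2 + 1)) * (\<Sum>l. (\<alpha> * \<beta>) ^ l * L (P12 l x))
        else if x \<in> Bzero \<epsilon> then
          2 / (k2 + 1) * (\<Sum>l. (\<alpha> * \<beta>) ^ l *
              (L (P12 l x) - \<alpha> * L (P12 l (Phi1 \<epsilon> x))))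
        else if x \<in> closure (Btwo \<epsilon>) then
          1 / k2 * (L x + \<beta> * L (Phi2 \<epsilon> x))
          - 4 * \<alpha> / (k2 + 1)^2 * (\<Sum>l. (\<alpha> * \<beta>) ^ l * L (P12 l (Phi1 \<epsilon> x)))
        else 0)
     else 0)"

definition pd :: "complex \<Rightarrow> (complex \<Rightarrow> real) \<Rightarrow> complex \<Rightarrow> real" where
  "pd v f z = deriv (\<lambda>t. f (z + complex_of_real t * v)) 0"

definition harmonic_on :: "complex set \<Rightarrow> (complex \<Rightarrow> real) \<Rightarrow> bool" where
  "harmonic_on U f \<longleftrightarrow> open U \<and>
    (\<forall>v\<in>{1, \<i>}. \<forall>z\<in>U.
        ((\<lambda>t. f (z + complex_of_real t * v)) has_real_derivative pd v f z) (at 0)) \<and>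
    (\<forall>v\<in>{1, \<i>}. \<forall>w\<in>{1, \<i>}. \<forall>z\<in>U.
        ((\<lambda>t. pd w f (z + complex_of_real t * v)) has_real_derivative pd v (pd w f) z) (at 0)) \<and>
    (\<forall>v\<in>{1, \<i>}. \<forall>w\<in>{1, \<i>}. continuous_on U (pd v (pd w f))) \<and>
    (\<forall>z\<in>U. pd 1 (pd 1 f) z + pd \<i> (pd \<i> f) z = 0)"

definition acoef :: "real \<Rightarrow> real \<Rightarrow> real \<Rightarrow> complex \<Rightarrow> real" where
  "acoef \<epsilon> k1 k2 x = (if x \<in> Bone \<epsilon> then k1 else if x \<in> Btwo \<epsilon> then k2 else 1)"

definition transmission :: "real \<Rightarrow> real \<Rightarrow> real \<Rightarrow> complex \<Rightarrow> complex \<Rightarrow> (complex \<Rightarrow> real) \<Rightarrow> bool" where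
  "transmission \<epsilon> k1 k2 c x0 f \<longleftrightarrow>
    (\<exists>l. (f \<longlongrightarrow> l) (at x0 within Bzero \<epsilon>) \<and> (f \<longlongrightarrow> l) (at x0 within ball c 1)) \<and>
    (\<exists>l. ((\<lambda>x. acoef \<epsilon> k1 k2 x * pd (sgn (x - c)) f x) \<longlongrightarrow> l) (at x0 within Bzero \<epsilon>) \<and>
         ((\<lambda>x. acoef \<epsilon> k1 k2 x * pd (sgn (x - c)) f x) \<longlongrightarrow> l) (at x0 within ball c 1))"

end

theory Submission
  imports Defs "HOL-Complex_Analysis.Complex_Analysis"
begin

definition hgrad :: "complex set \<Rightarrow> (complex \<Rightarrow> real) \<Rightarrow> (complex \<Rightarrow> complex) \<Rightarrow> bool" where
  "hgrad U f H \<longleftrightarrow> open U \<and> H holomorphic_on U \<and> (\<forall>z\<in>U. (f has_derivative (\<lambda>h. Re (H z * h))) (at z))"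

lemma hgrad_dir:
  assumes "(f has_derivative (\<lambda>h. Re (H * h))) (at z)"
  shows "((\<lambda>t. f (z + complex_of_real t * v)) has_real_derivative Re (H * v)) (at 0)"
proof -
  have "((\<lambda>t. z + complex_of_real t * v) has_derivative (\<lambda>h. complex_of_real h * v)) (at (0::real))"
    by (auto intro!: derivative_eq_intros)
  moreover have "(f has_derivative (\<lambda>h. Re (H * h))) (at (z + complex_of_real 0 * v))"
    using assms by simp
  ultimately have "((\<lambda>t. f (z + complex_of_real t * v)) has_derivative (\<lambda>h. Re (H * (complex_of_real h * v)))) (at 0)"
    by (rule has_derivative_compose)
  then show ?thesis
    unfolding has_field_derivative_def
    by (rule has_derivative_eq_rhs) (auto simp: fun_eq_iff algebra_simps)
qed

lemma pd_eq:
  assumes "(f has_derivative (\<lambda>h. Re (H * h))) (at z)"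
  shows "pd v f z = Re (H * v)"
  unfolding pd_def by (rule DERIV_imp_deriv, rule hgrad_dir[OF assms])

lemma hgrad_harmonic:
  assumes "hgrad U f H"
  shows "harmonic_on U f"
proof -
  have U: "open U" and hol: "H holomorphic_on U" and d: "\<And>z. z \<in> U \<Longrightarrow> (f has_derivative (\<lambda>h. Re (H z * h))) (at z)"
    using assms by (auto simp: hgrad_def)
  have pd1: "pd w f z = Re (H z * w)" if "z \<in> U" for z w
    by (rule pd_eq[OF d[OF that]])
  have hol': "deriv H holomorphic_on U" using hol U by (rule holomorphic_deriv)
  have D2: "((\<lambda>t. pd w f (z + complex_of_real t * v)) has_real_derivative Re (deriv H z * w * v)) (at 0)"
    if z: "z \<in> U" for z v w
  proof -
    have "(H has_field_derivative deriv H z) (at z)"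
      using hol U z holomorphic_derivI by blast
    then have c2: "(H has_derivative (\<lambda>h. deriv H z * h)) (at (z + complex_of_real 0 * v))"
      by (simp add: has_field_derivative_def)
    have c1: "((\<lambda>t. z + complex_of_real t * v) has_derivative (\<lambda>h. complex_of_real h * v)) (at (0::real))"
      by (auto intro!: derivative_eq_intros)
    have "((\<lambda>t. H (z + complex_of_real t * v)) has_derivative (\<lambda>h. deriv H z * (complex_of_real h * v))) (at (0::real))"
      by (rule has_derivative_compose[OF c1 c2])
    then have "((\<lambda>t. H (z + complex_of_real t * v) * w) has_derivative (\<lambda>h. deriv H z * (complex_of_real h * v) * w)) (at (0::real))"
      by (rule has_derivative_mult_left)
    then have "((\<lambda>t. Re (H (z + complex_of_real t * v) * w)) has_derivative (\<lambda>h. Re (deriv H z * (complex_of_real h * v) * w))) (at (0::real))"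
      by (rule bounded_linear.has_derivative[OF bounded_linear_Re])
    then have A: "((\<lambda>t. Re (H (z + complex_of_real t * v) * w)) has_real_derivative Re (deriv H z * v * w)) (at 0)"
      unfolding has_field_derivative_def
      by (rule has_derivative_eq_rhs) (auto simp: fun_eq_iff algebra_simps)
    have ev: "\<forall>\<^sub>F t in nhds 0. pd w f (z + complex_of_real t * v) = Re (H (z + complex_of_real t * v) * w)"
    proof -
      have "((\<lambda>t. z + complex_of_real t * v) \<longlongrightarrow> z + complex_of_real 0 * v) (at (0::real))"
        by (intro tendsto_intros)
      then have "((\<lambda>t. z + complex_of_real t * v) \<longlongrightarrow> z + complex_of_real 0 * v) (nhds (0::real))"
        by (rule tendsto_at_iff_tendsto_nhds[THEN iffD1])
      then have "\<forall>\<^sub>F t in nhds (0::real). z + complex_of_real t * v \<in> U"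
        using U z by (auto simp: tendsto_def)
      then show ?thesis by eventually_elim (simp add: pd1)
    qed
    show ?thesis
      using A by (subst DERIV_cong_ev[OF refl ev]) (simp_all add: mult_ac)
  qed
  have pd2: "pd v (pd w f) z = Re (deriv H z * w * v)" if "z \<in> U" for z v w
    using DERIV_imp_deriv[OF D2[OF that]] by (simp only: pd_def[of v "pd w f" z])
  show ?thesis
    unfolding harmonic_on_def
  proof (intro conjI ballI)
    show "open U" by fact
    show "((\<lambda>t. f (z + complex_of_real t * v)) has_real_derivative pd v f z) (at 0)" if "z \<in> U" for v z
      using hgrad_dir[OF d[OF that], of v] by (simp add: pd1[OF that] mult.commute)
    show "((\<lambda>t. pd w f (z + complex_of_real t * v)) has_real_derivative pd v (pd w f) z) (at 0)" if "z \<in> U" for v w z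
      using D2[OF that] by (simp add: pd2[OF that])
    show "continuous_on U (pd v (pd w f))" for v w
    proof -
      have "continuous_on U (\<lambda>z. Re (deriv H z * w * v))"
        using holomorphic_on_imp_continuous_on[OF hol'] by (intro continuous_intros) auto
      then show ?thesis by (rule continuous_on_cong[THEN iffD1, rotated 2]) (auto simp: pd2)
    qed
    show "pd 1 (pd 1 f) z + pd \<i> (pd \<i> f) z = 0" if "z \<in> U" for z
      by (simp add: pd2[OF that])
  qed
qed


lemma harmonic_on_Un:
  assumes "harmonic_on U f" "harmonic_on V f"
  shows "harmonic_on (U \<union> V) f"
  using assms unfolding harmonic_on_def
  by (auto intro!: continuous_on_open_Un)

lemma hgrad_subset: "hgrad U f H \<Longrightarrow> open V \<Longrightarrow> V \<subseteq> U \<Longrightarrow> hgrad V f H"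
  unfolding hgrad_def by (auto intro: holomorphic_on_subset)

lemma hgrad_cong:
  assumes "hgrad U f H" "\<And>x. x \<in> U \<Longrightarrow> f x = g x"
  shows "hgrad U g H"
  using assms unfolding hgrad_def
  by (auto intro: has_derivative_transform_within_open)

lemma hgrad_add:
  assumes "hgrad U f H" "hgrad U g K"
  shows "hgrad U (\<lambda>x. f x + g x) (\<lambda>z. H z + K z)"
  using assms unfolding hgrad_def
  by (auto intro!: holomorphic_intros has_derivative_eq_rhs[OF has_derivative_add] simp: fun_eq_iff algebra_simps)

lemma hgrad_diff:
  assumes "hgrad U f H" "hgrad U g K"
  shows "hgrad U (\<lambda>x. f x - g x) (\<lambda>z. H z - K z)"
  using assms unfolding hgrad_def
  by (auto intro!: holomorphic_intros has_derivative_eq_rhs[OF has_derivative_diff] simp: fun_eq_iff algebra_simps)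

lemma hgrad_cmult:
  assumes "hgrad U f H"
  shows "hgrad U (\<lambda>x. c * f x) (\<lambda>z. complex_of_real c * H z)"
  using assms unfolding hgrad_def
  by (auto intro!: holomorphic_intros has_derivative_eq_rhs[OF has_derivative_mult_right] simp: fun_eq_iff algebra_simps)

lemma hgrad_const: "open U \<Longrightarrow> hgrad U (\<lambda>x. c) (\<lambda>z. 0)"
  unfolding hgrad_def by (auto intro!: holomorphic_intros derivative_eq_intros)

lemma aux_eq: fixes a h b :: complex assumes "b \<noteq> 0"
  shows "(1 / norm b) * ((a * h) \<bullet> sgn b) = Re (a / b * h)"
proof -
  have "a / b * h = (a * h) * cnj b / complex_of_real ((norm b)^2)"
    by (simp add: complex_div_cnj[of "a*h" b] mult_ac)
  then have "Re (a / b * h) = Re ((a * h) * cnj b) / (norm b)^2"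
    by (simp only: Re_divide_of_real)
  moreover have "(a * h) \<bullet> sgn b = Re ((a * h) * cnj b) / norm b"
    by (simp add: sgn_div_norm inner_complex_def divide_inverse algebra_simps)
  ultimately show ?thesis using assms by (simp add: power2_eq_square)
qed

lemma ln_cmod_has_derivative:
  assumes "(g has_field_derivative g') (at z)" "g z \<noteq> 0"
  shows "((\<lambda>x. ln (cmod (g x))) has_derivative (\<lambda>h. Re (g' / g z * h))) (at z)"
proof -
  have n: "norm (g z) > 0" using assms by simp
  have "((\<lambda>x. ln (norm (g x))) has_derivative (\<lambda>h. (1 / norm (g z)) * ((g' * h) \<bullet> sgn (g z)))) (at z)"
  proof -
    have a: "(g has_derivative (\<lambda>h. g' * h)) (at z)" using assms(1) by (simp add: has_field_derivative_def)
    have b: "((\<lambda>x. norm (g x)) has_derivative (\<lambda>h. (g' * h) \<bullet> sgn (g z))) (at z)"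
      using has_derivative_compose[OF a has_derivative_norm[OF assms(2)]] by simp
    have c: "(ln has_derivative (\<lambda>h. (1 / norm (g z)) * h)) (at (norm (g z)))"
      using DERIV_ln[OF n] by (simp add: has_field_derivative_def divide_inverse)
    show ?thesis using has_derivative_compose[OF b c] by simp
  qed
  moreover have "(\<lambda>h. (1 / norm (g z)) * ((g' * h) \<bullet> sgn (g z))) = (\<lambda>h. Re (g' / g z * h))"
    using aux_eq[OF assms(2)] by auto
  ultimately show ?thesis by simp
qed

lemma hgrad_ln:
  assumes "open U" "g holomorphic_on U" "\<And>z. z \<in> U \<Longrightarrow> g z \<noteq> 0"
  shows "hgrad U (\<lambda>x. ln (cmod (g x))) (\<lambda>z. deriv g z / g z)"
  unfolding hgrad_def
proof (intro conjI ballI)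
  show "(\<lambda>z. deriv g z / g z) holomorphic_on U"
    using assms by (auto intro!: holomorphic_intros)
  show "((\<lambda>x. ln (cmod (g x))) has_derivative (\<lambda>h. Re (deriv g z / g z * h))) (at z)" if "z \<in> U" for z
    using assms that by (intro ln_cmod_has_derivative) (auto intro: holomorphic_derivI)
qed fact


lemma hgrad_series:
  fixes \<phi> :: "nat \<Rightarrow> complex \<Rightarrow> real" and K :: "nat \<Rightarrow> complex \<Rightarrow> complex"
  assumes U: "open U" and hg: "\<And>n. hgrad U (\<phi> n) (K n)"
    and summ: "\<And>z. z \<in> U \<Longrightarrow> summable (\<lambda>n. \<phi> n z)"
    and loc: "\<And>z. z \<in> U \<Longrightarrow> \<exists>d>0. cball z d \<subseteq> U \<and> (\<exists>M. summable M \<and> (\<forall>n. \<forall>w\<in>cball z d. norm (K n w) \<le> M n))"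
  shows "hgrad U (\<lambda>z. \<Sum>n. \<phi> n z) (\<lambda>z. \<Sum>n. K n z)"
  unfolding hgrad_def
proof (intro conjI ballI)
  have holK: "\<And>n. K n holomorphic_on U" using hg by (simp add: hgrad_def)
  have ul: "uniform_limit (cball z d) (\<lambda>n x. \<Sum>i<n. K i x) (\<lambda>x. \<Sum>n. K n x) sequentially"
    if "summable M" "\<forall>n. \<forall>w\<in>cball z d. norm (K n w) \<le> M n" for z d M
    using that by (intro Weierstrass_m_test) auto
  show "(\<lambda>z. \<Sum>n. K n z) holomorphic_on U"
  proof (rule holomorphic_uniform_sequence[OF U])
    show "(\<lambda>x. \<Sum>i<n. K i x) holomorphic_on U" for n
      by (intro holomorphic_on_sum holK)
    show "\<exists>d>0. cball x d \<subseteq> U \<and> uniform_limit (cball x d) (\<lambda>n x. \<Sum>i<n. K i x) (\<lambda>x. \<Sum>n. K n x) sequentially"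
      if "x \<in> U" for x
      using loc[OF that] ul by blast
  qed
  show "((\<lambda>z. \<Sum>n. \<phi> n z) has_derivative (\<lambda>h. Re ((\<Sum>n. K n z) * h))) (at z)" if z: "z \<in> U" for z
  proof -
    obtain d M where d: "d > 0" "cball z d \<subseteq> U" and M: "summable M" "\<forall>n. \<forall>w\<in>cball z d. norm (K n w) \<le> M n"
      using loc[OF z] by blast
    have U1: "\<forall>\<^sub>F n in sequentially. \<forall>x\<in>cball z d. dist (\<Sum>i<n. K i x) (\<Sum>n. K n x) < e" if "e > 0" for e
      using uniform_limitD[OF ul[OF M] that] .
    have "\<exists>g. \<forall>x\<in>ball z d. (\<lambda>n. \<phi> n x) sums (g x) \<and> (g has_derivative (\<lambda>h. Re ((\<Sum>n. K n x) * h))) (at x within ball z d)"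
    proof (rule has_derivative_series[where f'="\<lambda>n x h. Re (K n x * h)"])
      show "convex (ball z d)" by simp
      show "(\<phi> n has_derivative (\<lambda>h. Re (K n x * h))) (at x within ball z d)" if "x \<in> ball z d" for n x
      proof -
        have "x \<in> U" using that d by auto
        then have "(\<phi> n has_derivative (\<lambda>h. Re (K n x * h))) (at x)"
          using hg[of n] unfolding hgrad_def by blast
        then show ?thesis by (rule has_derivative_at_withinI)
      qed
      show "\<forall>\<^sub>F n in sequentially. \<forall>x\<in>ball z d. \<forall>h. norm ((\<Sum>i<n. Re (K i x * h)) - Re ((\<Sum>n. K n x) * h)) \<le> e * norm h"
        if "e > 0" for e
        using U1[OF that]
      proof eventually_elim
        case (elim n)
        show ?case
        proof (intro ballI allI)
          fix x h assume x: "x \<in> ball z d"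
          have "norm ((\<Sum>i<n. Re (K i x * h)) - Re ((\<Sum>n. K n x) * h)) = norm (Re (((\<Sum>i<n. K i x) - (\<Sum>n. K n x)) * h))"
            by (simp add: sum_distrib_right left_diff_distrib)
          also have "\<dots> \<le> norm (((\<Sum>i<n. K i x) - (\<Sum>n. K n x)) * h)"
            by (simp only: real_norm_def abs_Re_le_cmod)
          also have "\<dots> \<le> e * norm h"
          proof -
            have "x \<in> cball z d" using x by auto
            then have "dist (\<Sum>i<n. K i x) (\<Sum>n. K n x) < e" using elim by blast
            then have "norm ((\<Sum>i<n. K i x) - (\<Sum>n. K n x)) \<le> e" by (simp add: dist_norm)
            then show ?thesis by (simp add: norm_mult mult_right_mono)
          qed
          finally show "norm ((\<Sum>i<n. Re (K i x * h)) - Re ((\<Sum>n. K n x) * h)) \<le> e * norm h" .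
        qed
      qed
      show "z \<in> ball z d" using d by simp
      show "(\<lambda>n. \<phi> n z) sums (\<Sum>n. \<phi> n z)" using summ[OF z] by (simp add: summable_sums)
    qed
    then obtain g where g0: "\<forall>x\<in>ball z d. (\<lambda>n. \<phi> n x) sums (g x) \<and> (g has_derivative (\<lambda>h. Re ((\<Sum>n. K n x) * h))) (at x within ball z d)"
      by (rule exE)
    have g: "\<And>x. x \<in> ball z d \<Longrightarrow> (\<lambda>n. \<phi> n x) sums (g x)"
      "\<And>x. x \<in> ball z d \<Longrightarrow> (g has_derivative (\<lambda>h. Re ((\<Sum>n. K n x) * h))) (at x within ball z d)"
      using g0 by auto
    have "(g has_derivative (\<lambda>h. Re ((\<Sum>n. K n z) * h))) (at z)"
    proof -
      have zb: "z \<in> ball z d" using d by simp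
      have "at z within ball z d = at z" by (rule at_within_open[OF zb]) simp
      with g(2)[OF zb] show ?thesis by simp
    qed
    then show ?thesis
    proof (rule has_derivative_transform_within_open[of _ _ _ _ "ball z d"])
      show "x \<in> ball z d \<Longrightarrow> g x = (\<Sum>n. \<phi> n x)" for x
        using g(1)[of x] by (simp add: sums_iff)
    qed (use d in auto)
  qed
qed fact


lemma ln_abs_bound:
  fixes \<delta> x R :: real
  assumes "\<delta> > 0" "\<delta> \<le> x" "x \<le> R"
  shows "\<bar>ln x\<bar> \<le> \<bar>ln \<delta>\<bar> + \<bar>ln R\<bar>"
proof -
  have "ln \<delta> \<le> ln x" using assms by (intro ln_le_cancel_iff[THEN iffD2]) auto
  moreover have "ln x \<le> ln R" using assms by (intro ln_le_cancel_iff[THEN iffD2]) auto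
  ultimately show ?thesis by linarith
qed

lemma logseries:
  fixes g :: "nat \<Rightarrow> complex \<Rightarrow> complex" and c :: real
  assumes N: "open N" and hol: "\<And>l. g l holomorphic_on N" and nz: "\<And>l x. x \<in> N \<Longrightarrow> g l x \<noteq> 0"
    and c: "\<bar>c\<bar> < 1" and \<delta>: "\<delta> > 0"
    and bd: "\<And>l x. l \<ge> 1 \<Longrightarrow> x \<in> N \<Longrightarrow> \<delta> \<le> cmod (g l x) \<and> cmod (g l x) \<le> R"
  shows "hgrad N (\<lambda>x. \<Sum>l. c^l * ln (cmod (g l x))) (\<lambda>x. \<Sum>l. complex_of_real (c^l) * (deriv (g l) x / g l x))"
    and "\<And>x. x \<in> N \<Longrightarrow> summable (\<lambda>l. c^l * ln (cmod (g l x)))"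
    and "\<And>x. x \<in> N \<Longrightarrow> summable (\<lambda>l. complex_of_real (c^l) * (deriv (g l) x / g l x))"
proof -
  define K where "K l x = complex_of_real (c^l) * (deriv (g l) x / g l x)" for l x
  have hgl: "hgrad N (\<lambda>x. ln (cmod (g l x))) (\<lambda>x. deriv (g l) x / g l x)" for l
    using hgrad_ln[OF N hol nz] .
  have hg: "hgrad N (\<lambda>x. c^l * ln (cmod (g l x))) (K l)" for l
  proof -
    have "K l = (\<lambda>z. complex_of_real c ^ l * deriv (g l) z / g l z)" by (simp add: K_def fun_eq_iff)
    then show ?thesis using hgrad_cmult[OF hgl[of l], of "c^l"] by simp
  qed
  have gs: "summable (\<lambda>l. \<bar>c\<bar>^l)" using c by (intro summable_geometric) simp
  show summ: "summable (\<lambda>l. c^l * ln (cmod (g l x)))" if x: "x \<in> N" for x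
  proof (rule summable_comparison_test'[of "\<lambda>l. \<bar>c\<bar>^l * (\<bar>ln \<delta>\<bar> + \<bar>ln R\<bar>)" 1])
    show "summable (\<lambda>l. \<bar>c\<bar>^l * (\<bar>ln \<delta>\<bar> + \<bar>ln R\<bar>))" using gs by (rule summable_mult2)
    show "norm (c^l * ln (cmod (g l x))) \<le> \<bar>c\<bar>^l * (\<bar>ln \<delta>\<bar> + \<bar>ln R\<bar>)" if "1 \<le> l" for l
      using bd[OF that x] ln_abs_bound[OF \<delta>] by (auto simp: abs_mult power_abs intro!: mult_left_mono)
  qed
  have loc: "\<exists>d>0. cball z d \<subseteq> N \<and> (\<exists>M. summable M \<and> (\<forall>l. \<forall>w\<in>cball z d. norm (K l w) \<le> M l))"
    if z: "z \<in> N" for z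
  proof -
    obtain r where r: "r > 0" "cball z r \<subseteq> N" using N z open_contains_cball by blast
    define d where "d = r / 2"
    have d: "d > 0" "cball z d \<subseteq> N" using r by (auto simp: d_def)
    have "compact ((\<lambda>w. deriv (g 0) w / g 0 w) ` cball z d)"
    proof (rule compact_continuous_image)
      have "(\<lambda>w. deriv (g 0) w / g 0 w) holomorphic_on N"
        using hol nz N by (auto intro!: holomorphic_intros)
      then show "continuous_on (cball z d) (\<lambda>w. deriv (g 0) w / g 0 w)"
        using d by (meson holomorphic_on_imp_continuous_on holomorphic_on_subset)
    qed simp
    then have "bounded ((\<lambda>w. deriv (g 0) w / g 0 w) ` cball z d)" by (rule compact_imp_bounded)
    then obtain M0 where M0': "\<forall>v\<in>(\<lambda>w. deriv (g 0) w / g 0 w) ` cball z d. norm v \<le> M0"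
      unfolding bounded_iff by (rule exE)
    have M0: "norm (deriv (g 0) w / g 0 w) \<le> M0" if "w \<in> cball z d" for w
      using M0' that by blast
    define M where "M l = (if l = 0 then M0 else \<bar>c\<bar>^l * (\<bar>R\<bar> / d / \<delta>))" for l
    have "summable M"
    proof (rule summable_comparison_test'[of "\<lambda>l. \<bar>c\<bar>^l * (\<bar>R\<bar> / d / \<delta>)" 1])
      show "summable (\<lambda>l. \<bar>c\<bar>^l * (\<bar>R\<bar> / d / \<delta>))" using gs by (rule summable_mult2)
    qed (use d \<delta> in \<open>auto simp: M_def\<close>)
    moreover have "norm (K l w) \<le> M l" if w: "w \<in> cball z d" for l w
    proof (cases "l = 0")
      case True then show ?thesis using M0[OF w] by (simp add: K_def M_def)
    next
      case False
      then have l1: "l \<ge> 1" by simp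
      have wN: "w \<in> N" using w d by auto
      have cb: "cball w d \<subseteq> N"
      proof -
        have "cball w d \<subseteq> cball z r"
        proof
          fix u assume "u \<in> cball w d"
          then have "dist w u \<le> d" by simp
          moreover have "dist z w \<le> d" using w by simp
          ultimately have "dist z u \<le> r" using dist_triangle[of z u w] by (simp add: d_def)
          then show "u \<in> cball z r" by simp
        qed
        then show ?thesis using r(2) by blast
      qed
      have "norm ((deriv ^^ 1) (g l) w) \<le> fact 1 * R / d ^ 1"
      proof (rule Cauchy_inequality)
        show "g l holomorphic_on ball w d" using hol cb by (meson ball_subset_cball holomorphic_on_subset order_trans)
        show "continuous_on (cball w d) (g l)" using hol cb by (meson holomorphic_on_imp_continuous_on holomorphic_on_subset)
        show "norm (g l x) \<le> R" if "norm (w - x) = d" for x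
          using bd[OF l1] cb that by (auto simp: dist_norm)
      qed (use d in auto)
      then have dl: "norm (deriv (g l) w) \<le> R / d" by simp
      have gl: "\<delta> \<le> norm (g l w)" using bd[OF l1 wN] by simp
      have "norm (deriv (g l) w / g l w) \<le> (R / d) / \<delta>"
        unfolding norm_divide using dl gl \<delta> d
        by (meson frac_le norm_ge_zero order_trans)
      also have "\<dots> \<le> \<bar>R\<bar> / d / \<delta>" using d \<delta> by (simp add: divide_right_mono)
      finally have "norm (deriv (g l) w / g l w) \<le> \<bar>R\<bar> / d / \<delta>" .
      then have "norm (complex_of_real (c^l)) * norm (deriv (g l) w / g l w) \<le> \<bar>c\<bar>^l * (\<bar>R\<bar> / d / \<delta>)"
      proof -
        have "norm (complex_of_real (c^l)) = \<bar>c\<bar>^l" by (simp only: norm_of_real power_abs)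
        moreover have "\<bar>c\<bar>^l * norm (deriv (g l) w / g l w) \<le> \<bar>c\<bar>^l * (\<bar>R\<bar> / d / \<delta>)"
          by (rule mult_left_mono) (fact, simp)
        ultimately show ?thesis by simp
      qed
      then show ?thesis using False
        by (simp only: K_def M_def norm_mult if_False)
    qed
    ultimately show ?thesis using d by blast
  qed
  have main: "hgrad N (\<lambda>x. \<Sum>l. c^l * ln (cmod (g l x))) (\<lambda>x. \<Sum>l. K l x)"
    by (rule hgrad_series[OF N hg summ loc])
  then show "hgrad N (\<lambda>x. \<Sum>l. c^l * ln (cmod (g l x))) (\<lambda>x. \<Sum>l. complex_of_real (c^l) * (deriv (g l) x / g l x))"
    by (simp add: K_def)
  show "summable (\<lambda>l. complex_of_real (c^l) * (deriv (g l) x / g l x))" if x: "x \<in> N" for x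
  proof -
    obtain d M where dM: "d > 0" "summable M" "\<forall>l. \<forall>w\<in>cball x d. norm (K l w) \<le> M l"
      using loc[OF x] by blast
    have "summable (\<lambda>l. norm (K l x))"
      by (rule summable_comparison_test'[OF dM(2), of 0]) (use dM in auto)
    then show ?thesis unfolding K_def by (rule summable_norm_cancel)
  qed
qed


lemma funpow_maps:
  assumes "f ` Om \<subseteq> Om" "z \<in> Om" shows "(f ^^ l) z \<in> Om"
  using assms by (induction l) auto

lemma funpow_maps_Bd:
  assumes "f ` Om \<subseteq> Bd" "Bd \<subseteq> Om" "z \<in> Om" "l \<ge> 1" shows "(f ^^ l) z \<in> Bd"
proof -
  obtain m where l: "l = Suc m" using assms(4) by (cases l) auto
  have "(f ^^ m) z \<in> Om" using funpow_maps[of f Om z m] assms by blast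
  then show ?thesis using assms l by auto
qed

lemma funpow_holo:
  assumes "f holomorphic_on Om" "f ` Om \<subseteq> Om" shows "(f ^^ l) holomorphic_on Om"
proof (induction l)
  case 0 then show ?case by (simp add: id_def holomorphic_on_ident)
next
  case (Suc l)
  have "(f \<circ> (f ^^ l)) holomorphic_on Om"
    by (rule holomorphic_on_compose_gen[OF Suc assms(1)]) (use funpow_maps[OF assms(2)] in auto)
  then show ?case by (simp add: o_def)
qed

lemma famgen:
  fixes Tm S :: "complex \<Rightarrow> complex" and c :: real
  assumes Om: "open Om" "Tm holomorphic_on Om" "Tm ` Om \<subseteq> Bd" "Bd \<subseteq> Om"
    and \<delta>: "\<delta> > 0" "\<And>p. p \<in> Bd \<Longrightarrow> \<delta> \<le> cmod (p - y) \<and> cmod (p - y) \<le> R"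
    and U: "open U" "S holomorphic_on U" "S ` U \<subseteq> Om" "\<And>x. x \<in> U \<Longrightarrow> S x \<noteq> y"
    and c: "\<bar>c\<bar> < 1"
  shows "hgrad U (\<lambda>x. \<Sum>l. c^l * ln (cmod ((Tm ^^ l) (S x) - y)))
            (\<lambda>x. \<Sum>l. complex_of_real (c^l) * (deriv (\<lambda>x. (Tm ^^ l) (S x) - y) x / ((Tm ^^ l) (S x) - y)))"
    and "\<And>x. x \<in> U \<Longrightarrow> summable (\<lambda>l. c^l * ln (cmod ((Tm ^^ l) (S x) - y)))"
    and "\<And>x. x \<in> U \<Longrightarrow> summable (\<lambda>l. complex_of_real (c^l) * (deriv (\<lambda>x. (Tm ^^ l) (S x) - y) x / ((Tm ^^ l) (S x) - y)))"
    and "\<And>l. hgrad U (\<lambda>x. ln (cmod ((Tm ^^ l) (S x) - y))) (\<lambda>x. deriv (\<lambda>x. (Tm ^^ l) (S x) - y) x / ((Tm ^^ l) (S x) - y))"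
proof -
  define g where "g l x = (Tm ^^ l) (S x) - y" for l x
  have TO: "Tm ` Om \<subseteq> Om" using Om by blast
  have hol: "g l holomorphic_on U" for l
  proof -
    have "((Tm ^^ l) \<circ> S) holomorphic_on U"
      by (rule holomorphic_on_compose_gen[OF U(2) funpow_holo[OF Om(2) TO] U(3)])
    then show ?thesis unfolding g_def o_def by (intro holomorphic_intros)
  qed
  have SO: "x \<in> U \<Longrightarrow> S x \<in> Om" for x using U by blast
  have nz: "g l x \<noteq> 0" if x: "x \<in> U" for l x
  proof (cases "l = 0")
    case True then show ?thesis using U(4)[OF x] by (simp add: g_def)
  next
    case False
    then have "(Tm ^^ l) (S x) \<in> Bd" using funpow_maps_Bd[OF Om(3,4) SO[OF x]] by simp
    then show ?thesis using \<delta> by (fastforce simp: g_def)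
  qed
  have bd: "\<delta> \<le> cmod (g l x) \<and> cmod (g l x) \<le> R" if "l \<ge> 1" "x \<in> U" for l x
  proof -
    have "(Tm ^^ l) (S x) \<in> Bd" using funpow_maps_Bd[OF Om(3,4) SO[OF that(2)] that(1)] .
    then show ?thesis using \<delta>(2) by (simp add: g_def)
  qed
  note L = logseries[OF U(1) hol nz c \<delta>(1) bd]
  show "hgrad U (\<lambda>x. \<Sum>l. c^l * ln (cmod ((Tm ^^ l) (S x) - y)))
            (\<lambda>x. \<Sum>l. complex_of_real (c^l) * (deriv (\<lambda>x. (Tm ^^ l) (S x) - y) x / ((Tm ^^ l) (S x) - y)))"
    using L(1) by (simp add: g_def[abs_def])
  show "\<And>x. x \<in> U \<Longrightarrow> summable (\<lambda>l. c^l * ln (cmod ((Tm ^^ l) (S x) - y)))"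
    using L(2) by (simp add: g_def[abs_def])
  show "\<And>x. x \<in> U \<Longrightarrow> summable (\<lambda>l. complex_of_real (c^l) * (deriv (\<lambda>x. (Tm ^^ l) (S x) - y) x / ((Tm ^^ l) (S x) - y)))"
    using L(3) by (simp add: g_def[abs_def])
  show "hgrad U (\<lambda>x. ln (cmod ((Tm ^^ l) (S x) - y))) (\<lambda>x. deriv (\<lambda>x. (Tm ^^ l) (S x) - y) x / ((Tm ^^ l) (S x) - y))" for l
    using hgrad_ln[OF U(1) hol nz] by (simp add: g_def[abs_def])
qed


definition psi1 :: "real \<Rightarrow> complex \<Rightarrow> complex" where
  "psi1 \<epsilon> z = 1 / (z - complex_of_real (a0 \<epsilon>)) + complex_of_real (a0 \<epsilon>)"
definition psi2 :: "real \<Rightarrow> complex \<Rightarrow> complex" where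
  "psi2 \<epsilon> z = 1 / (z + complex_of_real (a0 \<epsilon>)) - complex_of_real (a0 \<epsilon>)"
definition Tm1 :: "real \<Rightarrow> complex \<Rightarrow> complex" where "Tm1 \<epsilon> = psi1 \<epsilon> \<circ> psi2 \<epsilon>"
definition Tm2 :: "real \<Rightarrow> complex \<Rightarrow> complex" where "Tm2 \<epsilon> = psi2 \<epsilon> \<circ> psi1 \<epsilon>"
definition Om1 :: "real \<Rightarrow> complex set" where "Om1 \<epsilon> = {z. 1 < cmod (z + complex_of_real (a0 \<epsilon>))}"
definition Om2 :: "real \<Rightarrow> complex set" where "Om2 \<epsilon> = {z. 1 < cmod (z - complex_of_real (a0 \<epsilon>))}"

lemma a0_gt: "\<epsilon> > 0 \<Longrightarrow> a0 \<epsilon> > 1" by (simp add: a0_def)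

lemma Phi1_psi: "Phi1 \<epsilon> z = cnj (psi1 \<epsilon> z)"
  by (simp add: Phi1_def psi1_def complex_cnj_divide)
lemma Phi2_psi: "Phi2 \<epsilon> z = cnj (psi2 \<epsilon> z)"
  by (simp add: Phi2_def psi2_def complex_cnj_divide)
lemma psi1_cnj: "psi1 \<epsilon> (cnj z) = cnj (psi1 \<epsilon> z)"
  by (simp add: psi1_def complex_cnj_divide)
lemma psi2_cnj: "psi2 \<epsilon> (cnj z) = cnj (psi2 \<epsilon> z)"
  by (simp add: psi2_def complex_cnj_divide)
lemma Phi1_psi': "Phi1 \<epsilon> z = psi1 \<epsilon> (cnj z)" by (simp add: Phi1_psi psi1_cnj)
lemma Phi2_psi': "Phi2 \<epsilon> z = psi2 \<epsilon> (cnj z)" by (simp add: Phi2_psi psi2_cnj)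

lemma P12_eq: "Phi1 \<epsilon> \<circ> Phi2 \<epsilon> = Tm1 \<epsilon>"
  by (auto simp: fun_eq_iff Tm1_def Phi1_psi' Phi2_psi)
lemma P21_eq: "Phi2 \<epsilon> \<circ> Phi1 \<epsilon> = Tm2 \<epsilon>"
  by (auto simp: fun_eq_iff Tm2_def Phi2_psi' Phi1_psi)

lemma Tm1_cnj: "(Tm1 \<epsilon> ^^ l) (cnj z) = cnj ((Tm1 \<epsilon> ^^ l) z)"
  by (induction l) (auto simp: Tm1_def psi1_cnj psi2_cnj)
lemma Tm2_cnj: "(Tm2 \<epsilon> ^^ l) (cnj z) = cnj ((Tm2 \<epsilon> ^^ l) z)"
  by (induction l) (auto simp: Tm2_def psi1_cnj psi2_cnj)

lemma cen1_eq: "cen1 \<epsilon> = complex_of_real (a0 \<epsilon>)" by (simp add: cen1_def)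
lemma Bone_eq: "Bone \<epsilon> = ball (complex_of_real (a0 \<epsilon>)) 1" by (simp add: Bone_def cen1_def)
lemma Btwo_eq: "Btwo \<epsilon> = ball (- complex_of_real (a0 \<epsilon>)) 1" by (simp add: Btwo_def cen2_def)
lemma cBone_eq: "closure (Bone \<epsilon>) = cball (complex_of_real (a0 \<epsilon>)) 1" by (simp add: Bone_eq)
lemma cBtwo_eq: "closure (Btwo \<epsilon>) = cball (- complex_of_real (a0 \<epsilon>)) 1" by (simp add: Btwo_eq)
lemma Bzero_eq: "Bzero \<epsilon> = {z. 1 < cmod (z - complex_of_real (a0 \<epsilon>)) \<and> 1 < cmod (z + complex_of_real (a0 \<epsilon>))}"
  by (auto simp: Bzero_def cBone_eq cBtwo_eq dist_norm norm_minus_commute)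

lemma mem_Bone: "z \<in> Bone \<epsilon> \<longleftrightarrow> cmod (z - complex_of_real (a0 \<epsilon>)) < 1"
  by (simp add: Bone_eq dist_norm norm_minus_commute)
lemma mem_Btwo: "z \<in> Btwo \<epsilon> \<longleftrightarrow> cmod (z + complex_of_real (a0 \<epsilon>)) < 1"
  by (simp add: Btwo_eq dist_norm norm_minus_commute)
lemma mem_cBone: "z \<in> closure (Bone \<epsilon>) \<longleftrightarrow> cmod (z - complex_of_real (a0 \<epsilon>)) \<le> 1"
  by (simp add: cBone_eq dist_norm norm_minus_commute)
lemma mem_cBtwo: "z \<in> closure (Btwo \<epsilon>) \<longleftrightarrow> cmod (z + complex_of_real (a0 \<epsilon>)) \<le> 1"
  by (simp add: cBtwo_eq dist_norm norm_minus_commute)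

lemma sep1:
  assumes "\<epsilon> > 0" "cmod (z - complex_of_real (a0 \<epsilon>)) \<le> r" "r < 2 * a0 \<epsilon> - 1"
  shows "1 < cmod (z + complex_of_real (a0 \<epsilon>))"
proof -
  have "2 * a0 \<epsilon> = cmod (complex_of_real (2 * a0 \<epsilon>))" using a0_gt[OF assms(1)] by simp
  also have "\<dots> = cmod ((z + complex_of_real (a0 \<epsilon>)) - (z - complex_of_real (a0 \<epsilon>)))" by (simp add: algebra_simps)
  also have "\<dots> \<le> cmod (z + complex_of_real (a0 \<epsilon>)) + cmod (z - complex_of_real (a0 \<epsilon>))" by (rule norm_triangle_ineq4)
  finally show ?thesis using assms by linarith
qed

lemma sep2:
  assumes "\<epsilon> > 0" "cmod (z + complex_of_real (a0 \<epsilon>)) \<le> r" "r < 2 * a0 \<epsilon> - 1"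
  shows "1 < cmod (z - complex_of_real (a0 \<epsilon>))"
proof -
  have "2 * a0 \<epsilon> = cmod (complex_of_real (2 * a0 \<epsilon>))" using a0_gt[OF assms(1)] by simp
  also have "\<dots> = cmod ((z + complex_of_real (a0 \<epsilon>)) - (z - complex_of_real (a0 \<epsilon>)))" by (simp add: algebra_simps)
  also have "\<dots> \<le> cmod (z + complex_of_real (a0 \<epsilon>)) + cmod (z - complex_of_real (a0 \<epsilon>))" by (rule norm_triangle_ineq4)
  finally show ?thesis using assms by linarith
qed

lemma norm_psi1: "cmod (psi1 \<epsilon> z - complex_of_real (a0 \<epsilon>)) = 1 / cmod (z - complex_of_real (a0 \<epsilon>))"
  by (simp add: psi1_def norm_divide)
lemma norm_psi2: "cmod (psi2 \<epsilon> z + complex_of_real (a0 \<epsilon>)) = 1 / cmod (z + complex_of_real (a0 \<epsilon>))"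
  by (simp add: psi2_def norm_divide)

lemma open_Om1: "open (Om1 \<epsilon>)"
  unfolding Om1_def by (intro open_Collect_less continuous_intros)
lemma open_Om2: "open (Om2 \<epsilon>)"
  unfolding Om2_def by (intro open_Collect_less continuous_intros)

lemma inv_lt1: "1 < (t::real) \<Longrightarrow> 1 / t < 1" by (simp add: divide_less_eq)

lemma psi2_maps: "\<epsilon> > 0 \<Longrightarrow> z \<in> Om1 \<epsilon> \<Longrightarrow> psi2 \<epsilon> z \<in> Btwo \<epsilon>"
  by (simp add: Om1_def mem_Btwo norm_psi2 inv_lt1)
lemma psi1_maps: "\<epsilon> > 0 \<Longrightarrow> z \<in> Om2 \<epsilon> \<Longrightarrow> psi1 \<epsilon> z \<in> Bone \<epsilon>"
  by (simp add: Om2_def mem_Bone norm_psi1 inv_lt1)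

lemma Bone_Om2_disj: "\<epsilon> > 0 \<Longrightarrow> z \<in> Btwo \<epsilon> \<Longrightarrow> z \<in> Om2 \<epsilon>"
  using sep2[of \<epsilon> z 1] a0_gt[of \<epsilon>] by (simp add: mem_Btwo Om2_def)
lemma Bone_sub_Om1: "\<epsilon> > 0 \<Longrightarrow> z \<in> Bone \<epsilon> \<Longrightarrow> z \<in> Om1 \<epsilon>"
  using sep1[of \<epsilon> z 1] a0_gt[of \<epsilon>] by (simp add: mem_Bone Om1_def)

lemma psi1_holo: "psi1 \<epsilon> holomorphic_on Om2 \<epsilon>"
proof -
  have "z \<in> Om2 \<epsilon> \<Longrightarrow> z - complex_of_real (a0 \<epsilon>) \<noteq> 0" for z by (auto simp: Om2_def)
  then show ?thesis unfolding psi1_def[abs_def] by (intro holomorphic_intros) auto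
qed
lemma psi2_holo: "psi2 \<epsilon> holomorphic_on Om1 \<epsilon>"
proof -
  have "z \<in> Om1 \<epsilon> \<Longrightarrow> z + complex_of_real (a0 \<epsilon>) \<noteq> 0" for z by (auto simp: Om1_def)
  then show ?thesis unfolding psi2_def[abs_def] by (intro holomorphic_intros) auto
qed

lemma Tm1_maps: "\<epsilon> > 0 \<Longrightarrow> Tm1 \<epsilon> ` Om1 \<epsilon> \<subseteq> Bone \<epsilon>"
  using psi2_maps psi1_maps Bone_Om2_disj by (force simp: Tm1_def)
lemma Tm2_maps: "\<epsilon> > 0 \<Longrightarrow> Tm2 \<epsilon> ` Om2 \<epsilon> \<subseteq> Btwo \<epsilon>"
proof -
  assume e: "\<epsilon> > 0"
  have "z \<in> Bone \<epsilon> \<Longrightarrow> z \<in> Om1 \<epsilon>" for z using Bone_sub_Om1[OF e] .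
  then show ?thesis using psi2_maps[OF e] psi1_maps[OF e] by (force simp: Tm2_def)
qed
lemma Tm1_holo: "\<epsilon> > 0 \<Longrightarrow> Tm1 \<epsilon> holomorphic_on Om1 \<epsilon>"
  unfolding Tm1_def
  by (rule holomorphic_on_compose_gen[OF psi2_holo psi1_holo]) (use psi2_maps Bone_Om2_disj in blast)
lemma Tm2_holo: "\<epsilon> > 0 \<Longrightarrow> Tm2 \<epsilon> holomorphic_on Om2 \<epsilon>"
  unfolding Tm2_def
  by (rule holomorphic_on_compose_gen[OF psi1_holo psi2_holo]) (use psi1_maps Bone_sub_Om1 in blast)

lemma ball_bounds:
  assumes "cmod (p - c) < 1" "1 < cmod (y - c)"
  shows "cmod (y - c) - 1 \<le> cmod (p - y) \<and> cmod (p - y) \<le> cmod (y - c) + 1"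
proof -
  have "cmod (y - c) \<le> cmod (p - y) + cmod (p - c)"
    using norm_triangle_ineq4[of "p - c" "p - y"] by (simp add: norm_minus_commute)
  moreover have "cmod (p - y) \<le> cmod (p - c) + cmod (y - c)"
    using norm_triangle_ineq4[of "p - c" "y - c"] by simp
  ultimately show ?thesis using assms by linarith
qed


definition gfam :: "complex set \<Rightarrow> real \<Rightarrow> (nat \<Rightarrow> complex \<Rightarrow> real) \<Rightarrow> bool" where
  "gfam U c \<phi> \<longleftrightarrow> (\<exists>K. (\<forall>l. hgrad U (\<phi> l) (K l)) \<and> (\<forall>x\<in>U. summable (\<lambda>l. c^l * \<phi> l x)) \<and>
      (\<forall>x\<in>U. summable (\<lambda>l. complex_of_real (c^l) * K l x)) \<and>
      hgrad U (\<lambda>x. \<Sum>l. c^l * \<phi> l x) (\<lambda>x. \<Sum>l. complex_of_real (c^l) * K l x))"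

lemma gfam_cong:
  assumes "gfam U c \<phi>" "\<And>l x. x \<in> U \<Longrightarrow> \<phi> l x = \<psi> l x"
  shows "gfam U c \<psi>"
proof -
  obtain K where K: "\<forall>l. hgrad U (\<phi> l) (K l)" "\<forall>x\<in>U. summable (\<lambda>l. c^l * \<phi> l x)"
      "\<forall>x\<in>U. summable (\<lambda>l. complex_of_real (c^l) * K l x)"
      "hgrad U (\<lambda>x. \<Sum>l. c^l * \<phi> l x) (\<lambda>x. \<Sum>l. complex_of_real (c^l) * K l x)"
    using assms(1) unfolding gfam_def by blast
  show ?thesis unfolding gfam_def
  proof (intro exI conjI allI ballI)
    show "hgrad U (\<psi> l) (K l)" for l using hgrad_cong[OF K(1)[rule_format, of l]] assms(2) by blast
    show "summable (\<lambda>l. c^l * \<psi> l x)" if "x \<in> U" for x using K(2) that assms(2) by simp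
    show "summable (\<lambda>l. complex_of_real (c^l) * K l x)" if "x \<in> U" for x using K(3) that by simp
    show "hgrad U (\<lambda>x. \<Sum>l. c^l * \<psi> l x) (\<lambda>x. \<Sum>l. complex_of_real (c^l) * K l x)"
      using hgrad_cong[OF K(4)] assms(2) by simp
  qed
qed

lemma gfam_hgrad: "gfam U c \<phi> \<Longrightarrow> \<exists>H. hgrad U (\<lambda>x. \<Sum>l. c^l * \<phi> l x) H"
  unfolding gfam_def by blast

lemma gfam_summable: "gfam U c \<phi> \<Longrightarrow> x \<in> U \<Longrightarrow> summable (\<lambda>l. c^l * \<phi> l x)"
  unfolding gfam_def by blast

lemma gfam_term: "gfam U c \<phi> \<Longrightarrow> \<exists>K. hgrad U (\<phi> l) K"
  unfolding gfam_def by blast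

lemma gfam_subset: "gfam U c \<phi> \<Longrightarrow> open V \<Longrightarrow> V \<subseteq> U \<Longrightarrow> gfam V c \<phi>"
  unfolding gfam_def by (meson hgrad_subset subsetD)

lemma gfam_pd:
  assumes "gfam U c \<phi>" "x0 \<in> U"
  shows "pd v (\<lambda>x. \<Sum>l. c^l * \<phi> l x) x0 = (\<Sum>l. c^l * pd v (\<phi> l) x0)"
    and "summable (\<lambda>l. c^l * pd v (\<phi> l) x0)"
proof -
  obtain K where K: "\<forall>l. hgrad U (\<phi> l) (K l)"
      "\<forall>x\<in>U. summable (\<lambda>l. complex_of_real (c^l) * K l x)"
      "hgrad U (\<lambda>x. \<Sum>l. c^l * \<phi> l x) (\<lambda>x. \<Sum>l. complex_of_real (c^l) * K l x)"
    using assms(1) unfolding gfam_def by blast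
  have pdl: "pd v (\<phi> l) x0 = Re (K l x0 * v)" for l
    using K(1) assms(2) unfolding hgrad_def by (intro pd_eq) blast
  have s: "summable (\<lambda>l. complex_of_real (c^l) * K l x0)" using K(2) assms(2) by blast
  then have s2: "summable (\<lambda>l. complex_of_real (c^l) * K l x0 * v)" by (rule summable_mult2)
  have "pd v (\<lambda>x. \<Sum>l. c^l * \<phi> l x) x0 = Re ((\<Sum>l. complex_of_real (c^l) * K l x0) * v)"
    using K(3) assms(2) unfolding hgrad_def by (intro pd_eq) blast
  also have "\<dots> = Re (\<Sum>l. complex_of_real (c^l) * K l x0 * v)"
    using suminf_mult2[OF s] by simp
  also have "\<dots> = (\<Sum>l. Re (complex_of_real (c^l) * K l x0 * v))"
    by (rule Re_suminf[OF s2])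
  also have "\<dots> = (\<Sum>l. c^l * pd v (\<phi> l) x0)"
    by (simp add: pdl mult.assoc)
  finally show "pd v (\<lambda>x. \<Sum>l. c^l * \<phi> l x) x0 = (\<Sum>l. c^l * pd v (\<phi> l) x0)" .
  have "summable (\<lambda>l. Re (complex_of_real (c^l) * K l x0 * v))"
    using summable_Re[OF s2] .
  then show "summable (\<lambda>l. c^l * pd v (\<phi> l) x0)"
    by (simp add: pdl mult.assoc)
qed

lemma famgen_gfam:
  assumes "open Om" "Tm holomorphic_on Om" "Tm ` Om \<subseteq> Bd" "Bd \<subseteq> Om"
    and "\<delta> > 0" "\<And>p. p \<in> Bd \<Longrightarrow> \<delta> \<le> cmod (p - y) \<and> cmod (p - y) \<le> R"
    and "open U" "S holomorphic_on U" "S ` U \<subseteq> Om" "\<And>x. x \<in> U \<Longrightarrow> S x \<noteq> y"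
    and "\<bar>c\<bar> < 1"
  shows "gfam U c (\<lambda>l x. ln (cmod ((Tm ^^ l) (S x) - y)))"
proof -
  note F = famgen[of Om Tm Bd \<delta> y R U S c, OF assms]
  show ?thesis unfolding gfam_def
    apply (rule exI[of _ "\<lambda>l x. deriv (\<lambda>x. (Tm ^^ l) (S x) - y) x / ((Tm ^^ l) (S x) - y)"])
    using F by blast
qed


lemma psi1_holo': "psi1 \<epsilon> holomorphic_on (- {complex_of_real (a0 \<epsilon>)})"
  unfolding psi1_def[abs_def] by (intro holomorphic_intros) auto

lemma Bone_bounds:
  assumes "1 < cmod (y - complex_of_real (a0 \<epsilon>))" "p \<in> Bone \<epsilon>"
  shows "cmod (y - complex_of_real (a0 \<epsilon>)) - 1 \<le> cmod (p - y) \<and> cmod (p - y) \<le> cmod (y - complex_of_real (a0 \<epsilon>)) + 1"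
  using ball_bounds[of p "complex_of_real (a0 \<epsilon>)" y] assms by (simp add: mem_Bone)

lemma Btwo_bounds:
  assumes "1 < cmod (y + complex_of_real (a0 \<epsilon>))" "p \<in> Btwo \<epsilon>"
  shows "cmod (y + complex_of_real (a0 \<epsilon>)) - 1 \<le> cmod (p - y) \<and> cmod (p - y) \<le> cmod (y + complex_of_real (a0 \<epsilon>)) + 1"
  using ball_bounds[of p "- complex_of_real (a0 \<epsilon>)" y] assms by (simp add: mem_Btwo)

lemma Bone_sub_Om1': "\<epsilon> > 0 \<Longrightarrow> Bone \<epsilon> \<subseteq> Om1 \<epsilon>" using Bone_sub_Om1 by blast
lemma Btwo_sub_Om2': "\<epsilon> > 0 \<Longrightarrow> Btwo \<epsilon> \<subseteq> Om2 \<epsilon>" using Bone_Om2_disj by blast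

lemma cnj_Lg: "ln (cmod (cnj u - y)) = ln (cmod (u - cnj y))"
proof -
  have "cnj u - y = cnj (u - cnj y)" by simp
  then show ?thesis by (simp only: complex_mod_cnj)
qed

lemma FA1:
  assumes e: "\<epsilon> > 0" and y: "1 < cmod (y - complex_of_real (a0 \<epsilon>))" and U: "open U" "U \<subseteq> Om1 \<epsilon>" and c: "\<bar>c\<bar> < 1"
  shows "gfam U c (\<lambda>l x. Lg y ((Tm1 \<epsilon> ^^ Suc l) x))"
proof -
  have "gfam U c (\<lambda>l x. ln (cmod ((Tm1 \<epsilon> ^^ l) (Tm1 \<epsilon> x) - y)))"
  proof (rule famgen_gfam[OF open_Om1 Tm1_holo[OF e] Tm1_maps[OF e] Bone_sub_Om1'[OF e], of "cmod (y - complex_of_real (a0 \<epsilon>)) - 1"])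
    show "0 < cmod (y - complex_of_real (a0 \<epsilon>)) - 1" using y by simp
    show "\<And>p. p \<in> Bone \<epsilon> \<Longrightarrow> cmod (y - complex_of_real (a0 \<epsilon>)) - 1 \<le> cmod (p - y) \<and> cmod (p - y) \<le> cmod (y - complex_of_real (a0 \<epsilon>)) + 1"
      using Bone_bounds[OF y] by blast
    show "Tm1 \<epsilon> holomorphic_on U" using Tm1_holo[OF e] U(2) by (rule holomorphic_on_subset)
    show "Tm1 \<epsilon> ` U \<subseteq> Om1 \<epsilon>" using Tm1_maps[OF e] U(2) Bone_sub_Om1'[OF e] by blast
    show "Tm1 \<epsilon> x \<noteq> y" if "x \<in> U" for x
    proof
      assume "Tm1 \<epsilon> x = y"
      then have "y \<in> Bone \<epsilon>" using Tm1_maps[OF e] U(2) that by blast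
      then show False using y by (simp add: mem_Bone)
    qed
  qed (use U c in auto)
  then show ?thesis
    by (rule gfam_cong) (simp add: Lg_def funpow_swap1)
qed

lemma FAhat:
  assumes e: "\<epsilon> > 0" and y: "1 < cmod (y - complex_of_real (a0 \<epsilon>))" and U: "open U"
    and Ux: "\<And>x. x \<in> U \<Longrightarrow> x \<noteq> complex_of_real (a0 \<epsilon>) \<and> psi1 \<epsilon> x \<in> Om1 \<epsilon> \<and> Phi1 \<epsilon> x \<noteq> y" and c: "\<bar>c\<bar> < 1"
  shows "gfam U c (\<lambda>l x. Lg y ((Tm1 \<epsilon> ^^ l) (Phi1 \<epsilon> x)))"
proof -
  have y': "1 < cmod (cnj y - complex_of_real (a0 \<epsilon>))"
  proof -
    have "cnj y - complex_of_real (a0 \<epsilon>) = cnj (y - complex_of_real (a0 \<epsilon>))" by simp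
    then show ?thesis using y by (simp only: complex_mod_cnj)
  qed
  have "gfam U c (\<lambda>l x. ln (cmod ((Tm1 \<epsilon> ^^ l) (psi1 \<epsilon> x) - cnj y)))"
  proof (rule famgen_gfam[OF open_Om1 Tm1_holo[OF e] Tm1_maps[OF e] Bone_sub_Om1'[OF e], of "cmod (cnj y - complex_of_real (a0 \<epsilon>)) - 1"])
    show "0 < cmod (cnj y - complex_of_real (a0 \<epsilon>)) - 1" using y' by simp
    show "\<And>p. p \<in> Bone \<epsilon> \<Longrightarrow> cmod (cnj y - complex_of_real (a0 \<epsilon>)) - 1 \<le> cmod (p - cnj y) \<and> cmod (p - cnj y) \<le> cmod (cnj y - complex_of_real (a0 \<epsilon>)) + 1"
      using Bone_bounds[OF y'] by blast
    show "psi1 \<epsilon> holomorphic_on U" using psi1_holo' by (rule holomorphic_on_subset) (use Ux in auto)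
    show "psi1 \<epsilon> ` U \<subseteq> Om1 \<epsilon>" using Ux by auto
    show "psi1 \<epsilon> x \<noteq> cnj y" if "x \<in> U" for x
      using Ux[OF that] by (auto simp: Phi1_psi)
  qed (use U c in auto)
  then show ?thesis
    by (rule gfam_cong) (simp add: Lg_def Phi1_psi Tm1_cnj cnj_Lg)
qed

lemma FB1:
  assumes e: "\<epsilon> > 0" and y: "1 < cmod (y + complex_of_real (a0 \<epsilon>))" and U: "open U"
    and Ux: "\<And>x. x \<in> U \<Longrightarrow> x \<noteq> complex_of_real (a0 \<epsilon>) \<and> psi1 \<epsilon> x \<in> Om1 \<epsilon>" and c: "\<bar>c\<bar> < 1"
  shows "gfam U c (\<lambda>l x. Lg y ((Tm2 \<epsilon> ^^ Suc l) x))"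
proof -
  have "gfam U c (\<lambda>l x. ln (cmod ((Tm2 \<epsilon> ^^ l) (Tm2 \<epsilon> x) - y)))"
  proof (rule famgen_gfam[OF open_Om2 Tm2_holo[OF e] Tm2_maps[OF e] Btwo_sub_Om2'[OF e], of "cmod (y + complex_of_real (a0 \<epsilon>)) - 1"])
    show "0 < cmod (y + complex_of_real (a0 \<epsilon>)) - 1" using y by simp
    show "\<And>p. p \<in> Btwo \<epsilon> \<Longrightarrow> cmod (y + complex_of_real (a0 \<epsilon>)) - 1 \<le> cmod (p - y) \<and> cmod (p - y) \<le> cmod (y + complex_of_real (a0 \<epsilon>)) + 1"
      using Btwo_bounds[OF y] by blast
    have T2U: "Tm2 \<epsilon> x \<in> Btwo \<epsilon>" if "x \<in> U" for x
      using psi2_maps[OF e] Ux[OF that] by (simp add: Tm2_def)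
    show "Tm2 \<epsilon> holomorphic_on U"
      unfolding Tm2_def
    proof (rule holomorphic_on_compose_gen[OF _ psi2_holo])
      show "psi1 \<epsilon> holomorphic_on U" using psi1_holo' by (rule holomorphic_on_subset) (use Ux in auto)
    qed (use Ux in auto)
    show "Tm2 \<epsilon> ` U \<subseteq> Om2 \<epsilon>" using T2U Btwo_sub_Om2'[OF e] by blast
    show "Tm2 \<epsilon> x \<noteq> y" if "x \<in> U" for x
    proof
      assume "Tm2 \<epsilon> x = y"
      then have "y \<in> Btwo \<epsilon>" using T2U that by metis
      then show False using y by (simp add: mem_Btwo)
    qed
  qed (use U c in auto)
  then show ?thesis
    by (rule gfam_cong) (simp add: Lg_def funpow_swap1)
qed

lemma FBhat:
  assumes e: "\<epsilon> > 0" and y: "1 < cmod (y + complex_of_real (a0 \<epsilon>))" and U: "open U" "U \<subseteq> Om1 \<epsilon>" and c: "\<bar>c\<bar> < 1"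
  shows "gfam U c (\<lambda>l x. Lg y ((Tm2 \<epsilon> ^^ l) (Phi2 \<epsilon> x)))"
proof -
  have y': "1 < cmod (cnj y + complex_of_real (a0 \<epsilon>))"
  proof -
    have "cnj y + complex_of_real (a0 \<epsilon>) = cnj (y + complex_of_real (a0 \<epsilon>))" by simp
    then show ?thesis using y by (simp only: complex_mod_cnj)
  qed
  have "gfam U c (\<lambda>l x. ln (cmod ((Tm2 \<epsilon> ^^ l) (psi2 \<epsilon> x) - cnj y)))"
  proof (rule famgen_gfam[OF open_Om2 Tm2_holo[OF e] Tm2_maps[OF e] Btwo_sub_Om2'[OF e], of "cmod (cnj y + complex_of_real (a0 \<epsilon>)) - 1"])
    show "0 < cmod (cnj y + complex_of_real (a0 \<epsilon>)) - 1" using y' by simp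
    show "\<And>p. p \<in> Btwo \<epsilon> \<Longrightarrow> cmod (cnj y + complex_of_real (a0 \<epsilon>)) - 1 \<le> cmod (p - cnj y) \<and> cmod (p - cnj y) \<le> cmod (cnj y + complex_of_real (a0 \<epsilon>)) + 1"
      using Btwo_bounds[OF y'] by blast
    show "psi2 \<epsilon> holomorphic_on U" using psi2_holo U(2) by (rule holomorphic_on_subset)
    show "psi2 \<epsilon> ` U \<subseteq> Om2 \<epsilon>" using psi2_maps[OF e] U(2) Btwo_sub_Om2'[OF e] by blast
    show "psi2 \<epsilon> x \<noteq> cnj y" if "x \<in> U" for x
    proof
      assume "psi2 \<epsilon> x = cnj y"
      moreover have "x \<in> Om1 \<epsilon>" using U(2) that by blast
      ultimately have "cnj y \<in> Btwo \<epsilon>" using psi2_maps[OF e] by metis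
      then show False using y' by (simp add: mem_Btwo)
    qed
  qed (use U c in auto)
  then show ?thesis
    by (rule gfam_cong) (simp add: Lg_def Phi2_psi Tm2_cnj cnj_Lg)
qed

lemma SL:
  assumes "open U" "\<And>x. x \<in> U \<Longrightarrow> x \<noteq> y"
  shows "\<exists>H. hgrad U (\<lambda>x. Lg y x) H"
proof -
  have hol: "(\<lambda>x. x - y) holomorphic_on U" by (intro holomorphic_intros)
  have "hgrad U (\<lambda>x. ln (cmod ((\<lambda>x. x - y) x))) (\<lambda>z. deriv (\<lambda>x. x - y) z / (z - y))"
    using hgrad_ln[OF assms(1) hol] assms(2) by auto
  then show ?thesis by (auto simp: Lg_def)
qed

lemma SLPhi:
  assumes "open U" "\<And>x. x \<in> U \<Longrightarrow> x \<noteq> complex_of_real (a0 \<epsilon>) \<and> Phi1 \<epsilon> x \<noteq> y"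
  shows "\<exists>H. hgrad U (\<lambda>x. Lg y (Phi1 \<epsilon> x)) H"
proof -
  have hol: "(\<lambda>x. psi1 \<epsilon> x - cnj y) holomorphic_on U"
    using psi1_holo' holomorphic_on_subset assms(2) by (fastforce intro!: holomorphic_intros)
  have "hgrad U (\<lambda>x. ln (cmod ((\<lambda>x. psi1 \<epsilon> x - cnj y) x))) (\<lambda>z. deriv (\<lambda>x. psi1 \<epsilon> x - cnj y) z / (psi1 \<epsilon> z - cnj y))"
  proof (rule hgrad_ln[OF assms(1) hol])
    fix z assume "z \<in> U"
    then have "cnj (psi1 \<epsilon> z) \<noteq> y" using assms(2) by (auto simp: Phi1_psi)
    then show "psi1 \<epsilon> z - cnj y \<noteq> 0" by auto
  qed
  then have "hgrad U (\<lambda>x. Lg y (Phi1 \<epsilon> x)) (\<lambda>z. deriv (\<lambda>x. psi1 \<epsilon> x - cnj y) z / (psi1 \<epsilon> z - cnj y))"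
    by (rule hgrad_cong) (simp add: Lg_def Phi1_psi cnj_Lg)
  then show ?thesis by blast
qed


lemma Phi1_sphere_line:
  assumes n: "cmod n = 1" and t: "1 + t \<noteq> 0"
  shows "Phi1 \<epsilon> (complex_of_real (a0 \<epsilon>) + n + complex_of_real t * n) = complex_of_real (a0 \<epsilon>) + n + complex_of_real (1 / (1 + t) - 1) * n"
proof -
  have nc: "n * cnj n = 1" using n by (simp add: complex_norm_square[symmetric] mult.commute)
  have n0: "n \<noteq> 0" using n by auto
  have "cnj (complex_of_real (a0 \<epsilon>) + n + complex_of_real t * n) - complex_of_real (a0 \<epsilon>) = complex_of_real (1 + t) * cnj n"
    by (simp add: algebra_simps)
  then have "Phi1 \<epsilon> (complex_of_real (a0 \<epsilon>) + n + complex_of_real t * n) = 1 / (complex_of_real (1 + t) * cnj n) + complex_of_real (a0 \<epsilon>)"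
    by (simp add: Phi1_def)
  also have "1 / (complex_of_real (1 + t) * cnj n) = n / complex_of_real (1 + t)"
  proof -
    have cn: "cnj n = 1 / n" using nc n0 by (simp add: field_simps)
    have t': "complex_of_real (1 + t) \<noteq> 0" using t by (simp only: of_real_eq_0_iff) simp
    show ?thesis unfolding cn using t' n0 by (simp add: divide_simps del: of_real_add)
  qed
  also have "n / complex_of_real (1 + t) = n + complex_of_real (1 / (1 + t) - 1) * n"
  proof -
    have "complex_of_real (1 / (1 + t) - 1) = 1 / complex_of_real (1 + t) - 1" by simp
    moreover have t': "complex_of_real (1 + t) \<noteq> 0" using t by (simp only: of_real_eq_0_iff) simp
    ultimately show ?thesis by (simp add: algebra_simps del: of_real_add of_real_divide)
  qed
  finally show ?thesis by (simp add: algebra_simps)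
qed

lemma pd_refl:
  assumes fd: "(f has_derivative (\<lambda>h. Re (H * h))) (at x0)"
    and x0: "cmod (x0 - complex_of_real (a0 \<epsilon>)) = 1"
  shows "pd (x0 - complex_of_real (a0 \<epsilon>)) (\<lambda>x. f (Phi1 \<epsilon> x)) x0 = - pd (x0 - complex_of_real (a0 \<epsilon>)) f x0"
proof -
  define n where "n = x0 - complex_of_real (a0 \<epsilon>)"
  have n: "cmod n = 1" using x0 by (simp add: n_def)
  have x0e: "x0 = complex_of_real (a0 \<epsilon>) + n" by (simp add: n_def)
  define g where "g t = x0 + complex_of_real (1 / (1 + t) - 1) * n" for t :: real
  have ev: "\<forall>\<^sub>F t in nhds (0::real). f (Phi1 \<epsilon> (x0 + complex_of_real t * n)) = f (g t)"
  proof -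
    have "\<forall>\<^sub>F t in nhds (0::real). t \<in> {-1<..}" by (rule eventually_nhds_in_open) auto
    then show ?thesis
      by eventually_elim (use n in \<open>simp add: g_def x0e Phi1_sphere_line\<close>)
  qed
  have r: "((\<lambda>t::real. 1 / (1 + t) - 1) has_real_derivative -1) (at 0)"
    by (auto intro!: derivative_eq_intros)
  have gd: "(g has_derivative (\<lambda>h. complex_of_real (h * -1) * n)) (at 0)"
    unfolding g_def using r unfolding has_field_derivative_def
    by (auto intro!: derivative_eq_intros)
  have fd': "(f has_derivative (\<lambda>h. Re (H * h))) (at (g 0))" using fd by (simp add: g_def)
  have "((\<lambda>t. f (g t)) has_derivative (\<lambda>h. Re (H * (complex_of_real (h * -1) * n)))) (at 0)"
    by (rule has_derivative_compose[OF gd fd'])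
  then have "((\<lambda>t. f (g t)) has_real_derivative - Re (H * n)) (at 0)"
    unfolding has_field_derivative_def
    by (rule has_derivative_eq_rhs) (auto simp: fun_eq_iff algebra_simps)
  then have "((\<lambda>t. f (Phi1 \<epsilon> (x0 + complex_of_real t * n))) has_real_derivative - Re (H * n)) (at 0)"
    by (subst DERIV_cong_ev[OF refl ev refl])
  then have "pd n (\<lambda>x. f (Phi1 \<epsilon> x)) x0 = - Re (H * n)"
    unfolding pd_def by (rule DERIV_imp_deriv)
  moreover have "pd n f x0 = Re (H * n)" by (rule pd_eq[OF fd])
  ultimately show ?thesis by (simp add: n_def)
qed


lemma ev_line_in_open:
  assumes "open V" "x \<in> V"
  shows "\<forall>\<^sub>F t in nhds (0::real). x + complex_of_real t * v \<in> V"
proof -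
  have "((\<lambda>t. x + complex_of_real t * v) \<longlongrightarrow> x + complex_of_real 0 * v) (at (0::real))"
    by (intro tendsto_intros)
  then have "((\<lambda>t. x + complex_of_real t * v) \<longlongrightarrow> x + complex_of_real 0 * v) (nhds (0::real))"
    by (rule tendsto_at_iff_tendsto_nhds[THEN iffD1])
  then show ?thesis using assms by (auto simp: tendsto_def)
qed

lemma pd_local:
  assumes "open V" "x \<in> V" "\<And>z. z \<in> V \<Longrightarrow> f z = g z"
  shows "pd v f x = pd v g x"
  unfolding pd_def
proof (rule deriv_cong_ev[OF _ refl])
  show "\<forall>\<^sub>F t in nhds 0. f (x + complex_of_real t * v) = g (x + complex_of_real t * v)"
    using ev_line_in_open[OF assms(1,2), of v] by eventually_elim (use assms(3) in auto)
qed

lemma hgrad_pd: "hgrad U f H \<Longrightarrow> z \<in> U \<Longrightarrow> pd v f z = Re (H z * v)"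
  unfolding hgrad_def by (intro pd_eq) blast

lemma hgrad_cont: "hgrad U f H \<Longrightarrow> z \<in> U \<Longrightarrow> isCont f z"
  unfolding hgrad_def by (meson has_derivative_continuous)

lemma isCont_within: "isCont f x \<Longrightarrow> (f \<longlongrightarrow> f x) (at x within S)"
  unfolding isCont_def by (rule tendsto_mono[OF at_le[OF subset_UNIV]])

lemma tdata_transmission:
  assumes N: "open N" "x0 \<in> N" and h0: "hgrad N F0 H0" and h1: "hgrad N F1 H1"
    and e0: "\<And>x. x \<in> N \<Longrightarrow> x \<in> Bzero \<epsilon> \<Longrightarrow> f x = F0 x"
    and e1: "\<And>x. x \<in> N \<Longrightarrow> x \<in> ball c 1 \<Longrightarrow> f x = F1 x"
    and a1: "\<And>x. x \<in> ball c 1 \<Longrightarrow> acoef \<epsilon> k1 k2 x = k"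
    and a0: "\<And>x. x \<in> Bzero \<epsilon> \<Longrightarrow> acoef \<epsilon> k1 k2 x = 1"
    and val: "F0 x0 = F1 x0"
    and flux: "Re (H0 x0 * (x0 - c)) = k * Re (H1 x0 * (x0 - c))"
    and x0: "cmod (x0 - c) = 1"
    and oB: "open (Bzero \<epsilon>)"
  shows "transmission \<epsilon> k1 k2 c x0 f"
  unfolding transmission_def
proof (intro conjI)
  have evN0: "\<forall>\<^sub>F x in at x0 within Bzero \<epsilon>. x \<in> N \<and> x \<in> Bzero \<epsilon>"
    unfolding eventually_at_topological using N by blast
  have evN1: "\<forall>\<^sub>F x in at x0 within ball c 1. x \<in> N \<and> x \<in> ball c 1"
    unfolding eventually_at_topological using N by blast
  have lim0: "(F0 \<longlongrightarrow> F0 x0) (at x0 within S)" for S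
    using hgrad_cont[OF h0 N(2)] by (rule isCont_within)
  have lim1: "(F1 \<longlongrightarrow> F1 x0) (at x0 within S)" for S
    using hgrad_cont[OF h1 N(2)] by (rule isCont_within)
  show "\<exists>l. (f \<longlongrightarrow> l) (at x0 within Bzero \<epsilon>) \<and> (f \<longlongrightarrow> l) (at x0 within ball c 1)"
  proof (intro exI conjI)
    show "(f \<longlongrightarrow> F0 x0) (at x0 within Bzero \<epsilon>)"
      using lim0 by (rule tendsto_cong[THEN iffD2, rotated]) (use evN0 e0 in \<open>auto elim: eventually_mono\<close>)
    show "(f \<longlongrightarrow> F0 x0) (at x0 within ball c 1)"
      using lim1[of "ball c 1"] unfolding val
      by (rule tendsto_cong[THEN iffD2, rotated]) (use evN1 e1 in \<open>auto elim: eventually_mono\<close>)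
  qed
  have x0c: "x0 - c \<noteq> 0" using x0 by auto
  have sg: "sgn (x0 - c) = x0 - c" using x0 by (simp add: sgn_div_norm)
  have Hc0: "isCont H0 x0" using h0 N unfolding hgrad_def
    by (meson holomorphic_on_imp_continuous_on continuous_on_eq_continuous_at)
  have Hc1: "isCont H1 x0" using h1 N unfolding hgrad_def
    by (meson holomorphic_on_imp_continuous_on continuous_on_eq_continuous_at)
  have sgl: "((\<lambda>x. sgn (x - c)) \<longlongrightarrow> sgn (x0 - c)) (at x0 within S)" for S
    by (intro tendsto_intros x0c)
  have L0: "((\<lambda>x. Re (H0 x * sgn (x - c))) \<longlongrightarrow> Re (H0 x0 * (x0 - c))) (at x0 within S)" for S
  proof -
    have "(H0 \<longlongrightarrow> H0 x0) (at x0 within S)" using Hc0 by (rule isCont_within)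
    then have "((\<lambda>x. Re (H0 x * sgn (x - c))) \<longlongrightarrow> Re (H0 x0 * sgn (x0 - c))) (at x0 within S)"
      by (intro tendsto_intros sgl)
    then show ?thesis by (simp add: sg)
  qed
  have L1: "((\<lambda>x. Re (H1 x * sgn (x - c))) \<longlongrightarrow> Re (H1 x0 * (x0 - c))) (at x0 within S)" for S
  proof -
    have "(H1 \<longlongrightarrow> H1 x0) (at x0 within S)" using Hc1 by (rule isCont_within)
    then have "((\<lambda>x. Re (H1 x * sgn (x - c))) \<longlongrightarrow> Re (H1 x0 * sgn (x0 - c))) (at x0 within S)"
      by (intro tendsto_intros sgl)
    then show ?thesis by (simp add: sg)
  qed
  show "\<exists>l. ((\<lambda>x. acoef \<epsilon> k1 k2 x * pd (sgn (x - c)) f x) \<longlongrightarrow> l) (at x0 within Bzero \<epsilon>) \<and>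
         ((\<lambda>x. acoef \<epsilon> k1 k2 x * pd (sgn (x - c)) f x) \<longlongrightarrow> l) (at x0 within ball c 1)"
  proof (intro exI conjI)
    show "((\<lambda>x. acoef \<epsilon> k1 k2 x * pd (sgn (x - c)) f x) \<longlongrightarrow> Re (H0 x0 * (x0 - c))) (at x0 within Bzero \<epsilon>)"
      using L0[of "Bzero \<epsilon>"]
    proof (rule tendsto_cong[THEN iffD2, rotated])
      show "\<forall>\<^sub>F x in at x0 within Bzero \<epsilon>. acoef \<epsilon> k1 k2 x * pd (sgn (x - c)) f x = Re (H0 x * sgn (x - c))"
        using evN0
      proof eventually_elim
        case (elim x)
        have "pd (sgn (x - c)) f x = pd (sgn (x - c)) F0 x"
          by (rule pd_local[of "N \<inter> Bzero \<epsilon>"]) (use N oB elim e0 in auto)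
        also have "\<dots> = Re (H0 x * sgn (x - c))" using hgrad_pd[OF h0] elim by blast
        finally show ?case using a0 elim by simp
      qed
    qed
    show "((\<lambda>x. acoef \<epsilon> k1 k2 x * pd (sgn (x - c)) f x) \<longlongrightarrow> Re (H0 x0 * (x0 - c))) (at x0 within ball c 1)"
      unfolding flux
      using tendsto_mult_left[OF L1[of "ball c 1"], of k]
    proof (rule tendsto_cong[THEN iffD2, rotated])
      show "\<forall>\<^sub>F x in at x0 within ball c 1. acoef \<epsilon> k1 k2 x * pd (sgn (x - c)) f x = k * Re (H1 x * sgn (x - c))"
        using evN1
      proof eventually_elim
        case (elim x)
        have "pd (sgn (x - c)) f x = pd (sgn (x - c)) F1 x"
          by (rule pd_local[of "N \<inter> ball c 1"]) (use N elim e1 in auto)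
        also have "\<dots> = Re (H1 x * sgn (x - c))" using hgrad_pd[OF h1] elim by blast
        finally show ?case using a1 elim by simp
      qed
    qed
  qed
qed


lemma neg_cBone: "- x \<in> closure (Bone \<epsilon>) \<longleftrightarrow> x \<in> closure (Btwo \<epsilon>)"
proof -
  have "- x - complex_of_real (a0 \<epsilon>) = - (x + complex_of_real (a0 \<epsilon>))" by simp
  then show ?thesis by (simp only: mem_cBone mem_cBtwo norm_minus_cancel)
qed
lemma neg_cBtwo: "- x \<in> closure (Btwo \<epsilon>) \<longleftrightarrow> x \<in> closure (Bone \<epsilon>)"
proof -
  have "- x + complex_of_real (a0 \<epsilon>) = - (x - complex_of_real (a0 \<epsilon>))" by simp
  then show ?thesis by (simp only: mem_cBone mem_cBtwo norm_minus_cancel)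
qed
lemma neg_Bone: "- x \<in> Bone \<epsilon> \<longleftrightarrow> x \<in> Btwo \<epsilon>"
proof -
  have "- x - complex_of_real (a0 \<epsilon>) = - (x + complex_of_real (a0 \<epsilon>))" by simp
  then show ?thesis by (simp only: mem_Bone mem_Btwo norm_minus_cancel)
qed
lemma neg_Btwo: "- x \<in> Btwo \<epsilon> \<longleftrightarrow> x \<in> Bone \<epsilon>"
proof -
  have "- x + complex_of_real (a0 \<epsilon>) = - (x - complex_of_real (a0 \<epsilon>))" by simp
  then show ?thesis by (simp only: mem_Bone mem_Btwo norm_minus_cancel)
qed
lemma neg_Bzero: "- x \<in> Bzero \<epsilon> \<longleftrightarrow> x \<in> Bzero \<epsilon>"
  unfolding Bzero_def using neg_cBone neg_cBtwo by auto

lemma Phi1_neg: "Phi1 \<epsilon> (- z) = - Phi2 \<epsilon> z"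
proof -
  have "cnj (- z) - complex_of_real (a0 \<epsilon>) = - (cnj z + complex_of_real (a0 \<epsilon>))" by simp
  then show ?thesis unfolding Phi1_def Phi2_def by (simp only: divide_minus_right) simp
qed
lemma Phi2_neg: "Phi2 \<epsilon> (- z) = - Phi1 \<epsilon> z"
proof -
  have "cnj (- z) + complex_of_real (a0 \<epsilon>) = - (cnj z - complex_of_real (a0 \<epsilon>))" by simp
  then show ?thesis unfolding Phi1_def Phi2_def by (simp only: divide_minus_right) simp
qed
lemma P12_neg: "((Phi1 \<epsilon> \<circ> Phi2 \<epsilon>) ^^ l) (- z) = - ((Phi2 \<epsilon> \<circ> Phi1 \<epsilon>) ^^ l) z"
  by (induction l) (auto simp: Phi1_neg Phi2_neg)
lemma P21_neg: "((Phi2 \<epsilon> \<circ> Phi1 \<epsilon>) ^^ l) (- z) = - ((Phi1 \<epsilon> \<circ> Phi2 \<epsilon>) ^^ l) z"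
  by (induction l) (auto simp: Phi1_neg Phi2_neg)
lemma Lg_neg: "Lg (- y) (- p) = Lg y p"
proof -
  have "- p - - y = - (p - y)" by simp
  then show ?thesis by (simp only: Lg_def norm_minus_cancel)
qed

lemma disj_facts:
  assumes "\<epsilon> > 0"
  shows "x \<in> closure (Bone \<epsilon>) \<Longrightarrow> x \<notin> Bzero \<epsilon>" "x \<in> closure (Btwo \<epsilon>) \<Longrightarrow> x \<notin> Bzero \<epsilon>"
    "x \<in> closure (Bone \<epsilon>) \<Longrightarrow> x \<notin> closure (Btwo \<epsilon>)"
    "x \<in> closure (Btwo \<epsilon>) \<Longrightarrow> x \<notin> closure (Bone \<epsilon>)"
    "x \<in> Bone \<epsilon> \<Longrightarrow> x \<in> closure (Bone \<epsilon>)" "x \<in> Btwo \<epsilon> \<Longrightarrow> x \<in> closure (Btwo \<epsilon>)"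
    "x \<in> Bone \<epsilon> \<Longrightarrow> x \<notin> Bzero \<epsilon>" "x \<in> Btwo \<epsilon> \<Longrightarrow> x \<notin> Bzero \<epsilon>" "x \<in> Btwo \<epsilon> \<Longrightarrow> x \<notin> Bone \<epsilon>"
proof -
  have a: "x \<in> closure (Bone \<epsilon>) \<Longrightarrow> x \<notin> closure (Btwo \<epsilon>)"
    using sep1[OF assms, of x 1] a0_gt[OF assms] by (auto simp: mem_cBone mem_cBtwo)
  show "x \<in> closure (Bone \<epsilon>) \<Longrightarrow> x \<notin> closure (Btwo \<epsilon>)" by (fact a)
  show "x \<in> closure (Btwo \<epsilon>) \<Longrightarrow> x \<notin> closure (Bone \<epsilon>)" using a by blast
  show "x \<in> closure (Bone \<epsilon>) \<Longrightarrow> x \<notin> Bzero \<epsilon>" "x \<in> closure (Btwo \<epsilon>) \<Longrightarrow> x \<notin> Bzero \<epsilon>"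
    by (auto simp: Bzero_def)
  show b: "x \<in> Bone \<epsilon> \<Longrightarrow> x \<in> closure (Bone \<epsilon>)" "x \<in> Btwo \<epsilon> \<Longrightarrow> x \<in> closure (Btwo \<epsilon>)"
    by (auto intro: closure_subset[THEN subsetD])
  show "x \<in> Bone \<epsilon> \<Longrightarrow> x \<notin> Bzero \<epsilon>" "x \<in> Btwo \<epsilon> \<Longrightarrow> x \<notin> Bzero \<epsilon>"
    using b by (auto simp: Bzero_def)
  show "x \<in> Btwo \<epsilon> \<Longrightarrow> x \<notin> Bone \<epsilon>" using a b by blast
qed

lemma Gfun_sym:
  assumes e: "\<epsilon> > 0"
  shows "Gfun \<epsilon> k1 k2 x y = Gfun \<epsilon> k2 k1 (- x) (- y)"
proof -
  note D = disj_facts[OF e]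
  have cc: "contrast k2 * contrast k1 = contrast k1 * contrast k2" by (simp add: mult.commute)
  show ?thesis
    unfolding Gfun_def Let_def neg_cBone neg_cBtwo neg_Bone neg_Btwo neg_Bzero
      P12_neg P21_neg Phi1_neg Phi2_neg Lg_neg cc
    using D by (auto simp: algebra_simps)
qed


lemma GB0_one:
  assumes e: "\<epsilon> > 0" and y: "y \<in> Bzero \<epsilon>" and x: "x \<in> closure (Bone \<epsilon>)"
  shows "Gfun \<epsilon> k1 k2 x y = 2 / (k1 + 1) * (\<Sum>l. (contrast k1 * contrast k2)^l *
           (Lg y ((Tm1 \<epsilon> ^^ l) x) - contrast k2 * Lg y ((Tm2 \<epsilon> ^^ l) (Phi2 \<epsilon> x))))"
proof -
  note D = disj_facts[OF e]
  show ?thesis unfolding Gfun_def P12_eq P21_eq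
    by (simp only: Let_def y x D(1)[OF x] if_True if_False)
qed

lemma GB0_zero:
  assumes e: "\<epsilon> > 0" and y: "y \<in> Bzero \<epsilon>" and x: "x \<in> Bzero \<epsilon>"
  shows "Gfun \<epsilon> k1 k2 x y = Lg y x + (\<Sum>m. (contrast k1 * contrast k2)^(Suc m) *
           (Lg y ((Tm1 \<epsilon> ^^ Suc m) x) + Lg y ((Tm2 \<epsilon> ^^ Suc m) x))
          - (contrast k1 * contrast k2)^m * (contrast k2 * Lg y ((Tm2 \<epsilon> ^^ m) (Phi2 \<epsilon> x))
               + contrast k1 * Lg y ((Tm1 \<epsilon> ^^ m) (Phi1 \<epsilon> x))))"
proof -
  have x1: "x \<notin> closure (Bone \<epsilon>)" using x by (auto simp: Bzero_def)
  show ?thesis unfolding Gfun_def P12_eq P21_eq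
    by (simp only: Let_def y x x1 if_True if_False diff_Suc_1 funpow_0 id_apply)
qed

lemma GB1_one:
  assumes e: "\<epsilon> > 0" and y: "y \<in> Bone \<epsilon>" and x: "x \<in> closure (Bone \<epsilon>)"
  shows "Gfun \<epsilon> k1 k2 x y = 1 / k1 * (Lg y x + contrast k1 * Lg y (Phi1 \<epsilon> x))
          - 4 * contrast k2 / (k1 + 1)^2 * (\<Sum>l. (contrast k1 * contrast k2)^l * Lg y ((Tm2 \<epsilon> ^^ l) (Phi2 \<epsilon> x)))"
proof -
  note D = disj_facts[OF e]
  have y0: "y \<notin> Bzero \<epsilon>" using D(7)[OF y] .
  show ?thesis unfolding Gfun_def P12_eq P21_eq
    by (simp only: Let_def y y0 x if_True if_False)
qed

lemma GB1_zero:
  assumes e: "\<epsilon> > 0" and y: "y \<in> Bone \<epsilon>" and x: "x \<in> Bzero \<epsilon>"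
  shows "Gfun \<epsilon> k1 k2 x y = 2 / (k1 + 1) * (\<Sum>l. (contrast k1 * contrast k2)^l *
           (Lg y ((Tm2 \<epsilon> ^^ l) x) - contrast k2 * Lg y ((Tm2 \<epsilon> ^^ l) (Phi2 \<epsilon> x))))"
proof -
  note D = disj_facts[OF e]
  have y0: "y \<notin> Bzero \<epsilon>" using D(7)[OF y] .
  have x1: "x \<notin> closure (Bone \<epsilon>)" using x by (auto simp: Bzero_def)
  show ?thesis unfolding Gfun_def P12_eq P21_eq
    by (simp only: Let_def y y0 x x1 if_True if_False)
qed

lemma GB1_two:
  assumes e: "\<epsilon> > 0" and y: "y \<in> Bone \<epsilon>" and x: "x \<in> closure (Btwo \<epsilon>)"
  shows "Gfun \<epsilon> k1 k2 x y = 4 / ((k1 + 1) * (k2 + 1)) * (\<Sum>l. (contrast k1 * contrast k2)^l * Lg y ((Tm2 \<epsilon> ^^ l) x))"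
proof -
  note D = disj_facts[OF e]
  have y0: "y \<notin> Bzero \<epsilon>" using D(7)[OF y] .
  have x1: "x \<notin> closure (Bone \<epsilon>)" using D(4)[OF x] .
  have x0: "x \<notin> Bzero \<epsilon>" using D(2)[OF x] .
  show ?thesis unfolding Gfun_def P12_eq P21_eq
    by (simp only: Let_def y y0 x x0 x1 if_True if_False)
qed

lemma GB2_one:
  assumes e: "\<epsilon> > 0" and y: "y \<in> Btwo \<epsilon>" and x: "x \<in> closure (Bone \<epsilon>)"
  shows "Gfun \<epsilon> k1 k2 x y = 4 / ((k1 + 1) * (k2 + 1)) * (\<Sum>l. (contrast k1 * contrast k2)^l * Lg y ((Tm1 \<epsilon> ^^ l) x))"
proof -
  note D = disj_facts[OF e]
  have y0: "y \<notin> Bzero \<epsilon>" using D(8)[OF y] .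
  have y1: "y \<notin> Bone \<epsilon>" using D(9)[OF y] .
  show ?thesis unfolding Gfun_def P12_eq P21_eq
    by (simp only: Let_def y y0 y1 x if_True if_False)
qed

lemma GB2_zero:
  assumes e: "\<epsilon> > 0" and y: "y \<in> Btwo \<epsilon>" and x: "x \<in> Bzero \<epsilon>"
  shows "Gfun \<epsilon> k1 k2 x y = 2 / (k2 + 1) * (\<Sum>l. (contrast k1 * contrast k2)^l *
           (Lg y ((Tm1 \<epsilon> ^^ l) x) - contrast k1 * Lg y ((Tm1 \<epsilon> ^^ l) (Phi1 \<epsilon> x))))"
proof -
  note D = disj_facts[OF e]
  have y0: "y \<notin> Bzero \<epsilon>" using D(8)[OF y] .
  have y1: "y \<notin> Bone \<epsilon>" using D(9)[OF y] .
  have x1: "x \<notin> closure (Bone \<epsilon>)" using x by (auto simp: Bzero_def)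
  show ?thesis unfolding Gfun_def P12_eq P21_eq
    by (simp only: Let_def y y0 y1 x x1 if_True if_False)
qed


definition hg :: "complex set \<Rightarrow> (complex \<Rightarrow> real) \<Rightarrow> bool" where
  "hg U f \<longleftrightarrow> (\<exists>H. hgrad U f H)"

lemma hgI: "hgrad U f H \<Longrightarrow> hg U f" unfolding hg_def by blast
lemma hg_add: "hg U f \<Longrightarrow> hg U g \<Longrightarrow> hg U (\<lambda>x. f x + g x)"
  unfolding hg_def using hgrad_add by blast
lemma hg_diff: "hg U f \<Longrightarrow> hg U g \<Longrightarrow> hg U (\<lambda>x. f x - g x)"
  unfolding hg_def using hgrad_diff by blast
lemma hg_cmult: "hg U f \<Longrightarrow> hg U (\<lambda>x. c * f x)"
  unfolding hg_def using hgrad_cmult by blast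
lemma hg_cong: "hg U f \<Longrightarrow> (\<And>x. x \<in> U \<Longrightarrow> f x = g x) \<Longrightarrow> hg U g"
  unfolding hg_def using hgrad_cong by blast
lemma hg_harmonic: "hg U f \<Longrightarrow> harmonic_on U f"
  unfolding hg_def using hgrad_harmonic by blast
lemma hg_gfam: "gfam U c \<phi> \<Longrightarrow> hg U (\<lambda>x. \<Sum>l. c^l * \<phi> l x)"
  unfolding hg_def by (rule gfam_hgrad)
lemma hg_gfam_term: "gfam U c \<phi> \<Longrightarrow> hg U (\<phi> l)"
  unfolding hg_def by (rule gfam_term)
lemma hg_subset: "hg U f \<Longrightarrow> open V \<Longrightarrow> V \<subseteq> U \<Longrightarrow> hg V f"
  unfolding hg_def using hgrad_subset by blast

lemma hg_deriv: "hg U f \<Longrightarrow> z \<in> U \<Longrightarrow> \<exists>H. (f has_derivative (\<lambda>h. Re (H * h))) (at z)"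
  unfolding hg_def hgrad_def by blast

lemma pd_add: "hg U f \<Longrightarrow> hg U g \<Longrightarrow> z \<in> U \<Longrightarrow> pd v (\<lambda>x. f x + g x) z = pd v f z + pd v g z"
proof -
  assume "hg U f" "hg U g" and z: "z \<in> U"
  then obtain H K where H: "hgrad U f H" and K: "hgrad U g K" unfolding hg_def by blast
  have "pd v (\<lambda>x. f x + g x) z = Re ((H z + K z) * v)" using hgrad_pd[OF hgrad_add[OF H K] z] .
  also have "\<dots> = Re (H z * v) + Re (K z * v)" by (simp add: distrib_right)
  finally show ?thesis using hgrad_pd[OF H z] hgrad_pd[OF K z] by simp
qed
lemma pd_diff: "hg U f \<Longrightarrow> hg U g \<Longrightarrow> z \<in> U \<Longrightarrow> pd v (\<lambda>x. f x - g x) z = pd v f z - pd v g z"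
proof -
  assume "hg U f" "hg U g" and z: "z \<in> U"
  then obtain H K where H: "hgrad U f H" and K: "hgrad U g K" unfolding hg_def by blast
  have "pd v (\<lambda>x. f x - g x) z = Re ((H z - K z) * v)" using hgrad_pd[OF hgrad_diff[OF H K] z] .
  also have "\<dots> = Re (H z * v) - Re (K z * v)" by (simp add: left_diff_distrib)
  finally show ?thesis using hgrad_pd[OF H z] hgrad_pd[OF K z] by simp
qed
lemma pd_cmult: "hg U f \<Longrightarrow> z \<in> U \<Longrightarrow> pd v (\<lambda>x. c * f x) z = c * pd v f z"
proof -
  assume "hg U f" "z \<in> U"
  then obtain H where H: "hgrad U f H" unfolding hg_def by blast
  have "pd v (\<lambda>x. c * f x) z = Re (complex_of_real c * H z * v)"
    using hgrad_pd[OF hgrad_cmult[OF H] \<open>z \<in> U\<close>] .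
  also have "\<dots> = c * Re (H z * v)" by (simp add: mult.assoc)
  also have "\<dots> = c * pd v f z" using hgrad_pd[OF H \<open>z \<in> U\<close>] by simp
  finally show ?thesis .
qed

lemma sum_head:
  fixes c :: real
  assumes "summable (\<lambda>m. c^m * f (Suc m))"
  shows "(\<Sum>l. c^l * f l) = f 0 + c * (\<Sum>m. c^m * f (Suc m))"
proof -
  have s: "summable (\<lambda>m. c^(Suc m) * f (Suc m))"
    using summable_mult[OF assms, of c] by (simp add: mult.assoc)
  then have s2: "summable (\<lambda>l. c^l * f l)" by (subst summable_Suc_iff[symmetric])
  have "(\<Sum>m. c^(Suc m) * f (Suc m)) = (\<Sum>l. c^l * f l) - f 0"
    using suminf_split_head[OF s2] by simp
  moreover have "(\<Sum>m. c^(Suc m) * f (Suc m)) = c * (\<Sum>m. c^m * f (Suc m))"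
    using suminf_mult[OF assms, of c] by (simp add: mult.assoc)
  ultimately show ?thesis by simp
qed

lemma sum_head_summable:
  fixes c :: real
  assumes "summable (\<lambda>m. c^m * f (Suc m))"
  shows "summable (\<lambda>l. c^l * f l)"
proof -
  have s: "summable (\<lambda>m. c^(Suc m) * f (Suc m))"
    using summable_mult[OF assms, of c] by (simp add: mult.assoc)
  then show ?thesis by (subst summable_Suc_iff[symmetric])
qed

definition Nset :: "real \<Rightarrow> complex \<Rightarrow> complex set" where
  "Nset \<epsilon> y = {x. x \<noteq> complex_of_real (a0 \<epsilon>) \<and> 1 < cmod (x + complex_of_real (a0 \<epsilon>)) \<and>
      1 < cmod (psi1 \<epsilon> x + complex_of_real (a0 \<epsilon>)) \<and> x \<noteq> y \<and> psi1 \<epsilon> x \<noteq> cnj y}"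

lemma open_Nset: "open (Nset \<epsilon> y)"
proof -
  define a where "a = complex_of_real (a0 \<epsilon>)"
  have eq: "Nset \<epsilon> y = ((- {a}) \<inter> psi1 \<epsilon> -` ({w. 1 < cmod (w + a)} \<inter> (- {cnj y}))) \<inter> ({x. 1 < cmod (x + a)} \<inter> (- {y}))"
    by (auto simp: Nset_def a_def)
  have c: "continuous_on (- {a}) (psi1 \<epsilon>)"
    using psi1_holo' holomorphic_on_imp_continuous_on by (simp add: a_def)
  have o1: "open ((- {a}) \<inter> psi1 \<epsilon> -` ({w. 1 < cmod (w + a)} \<inter> (- {cnj y})))"
    by (rule continuous_open_preimage[OF c]) (auto intro!: open_Int open_Collect_less continuous_intros)
  have o2: "open ({x. 1 < cmod (x + a)} \<inter> (- {y}))"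
    by (auto intro!: open_Int open_Collect_less continuous_intros)
  show ?thesis unfolding eq using o1 o2 by (rule open_Int)
qed

lemma psi1_sphere: "cmod (x0 - complex_of_real (a0 \<epsilon>)) = 1 \<Longrightarrow> psi1 \<epsilon> x0 = cnj x0"
proof -
  assume n: "cmod (x0 - complex_of_real (a0 \<epsilon>)) = 1"
  have "(x0 - complex_of_real (a0 \<epsilon>)) * cnj (x0 - complex_of_real (a0 \<epsilon>)) = complex_of_real ((cmod (x0 - complex_of_real (a0 \<epsilon>)))^2)"
    by (rule complex_norm_square[symmetric])
  then have nn: "(x0 - complex_of_real (a0 \<epsilon>)) * cnj (x0 - complex_of_real (a0 \<epsilon>)) = 1" using n by simp
  have nz: "x0 - complex_of_real (a0 \<epsilon>) \<noteq> 0" using n by auto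
  have "1 / (x0 - complex_of_real (a0 \<epsilon>)) = cnj (x0 - complex_of_real (a0 \<epsilon>))"
    using nn nz by (simp add: field_simps)
  then show ?thesis by (simp add: psi1_def)
qed

lemma Phi1_sphere: "cmod (x0 - complex_of_real (a0 \<epsilon>)) = 1 \<Longrightarrow> Phi1 \<epsilon> x0 = x0"
  by (simp add: Phi1_psi psi1_sphere)

lemma x0_in_Nset:
  assumes e: "\<epsilon> > 0" and x0: "cmod (x0 - complex_of_real (a0 \<epsilon>)) = 1" and y: "cmod (y - complex_of_real (a0 \<epsilon>)) \<noteq> 1"
  shows "x0 \<in> Nset \<epsilon> y"
proof -
  have p: "psi1 \<epsilon> x0 = cnj x0" by (rule psi1_sphere[OF x0])
  have s: "1 < cmod (x0 + complex_of_real (a0 \<epsilon>))" using sep1[OF e, of x0 1] a0_gt[OF e] x0 by simp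
  have "cnj x0 + complex_of_real (a0 \<epsilon>) = cnj (x0 + complex_of_real (a0 \<epsilon>))" by simp
  then have s2: "1 < cmod (cnj x0 + complex_of_real (a0 \<epsilon>))" using s by (simp only: complex_mod_cnj)
  show ?thesis unfolding Nset_def using x0 y s s2 p by auto
qed

lemma Nset_props:
  assumes "x \<in> Nset \<epsilon> y"
  shows "x \<noteq> complex_of_real (a0 \<epsilon>)" "x \<in> Om1 \<epsilon>" "psi1 \<epsilon> x \<in> Om1 \<epsilon>" "x \<noteq> y" "Phi1 \<epsilon> x \<noteq> y"
  using assms by (auto simp: Nset_def Om1_def Phi1_psi)


lemma contrast_abs: "k > 0 \<Longrightarrow> \<bar>contrast k\<bar> < 1"
  by (auto simp: contrast_def abs_less_iff divide_less_eq less_divide_eq)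

lemma c_abs: "k1 > 0 \<Longrightarrow> k2 > 0 \<Longrightarrow> \<bar>contrast k1 * contrast k2\<bar> < 1"
proof -
  assume "k1 > 0" "k2 > 0"
  then have "\<bar>contrast k1\<bar> < 1" "\<bar>contrast k2\<bar> < 1" using contrast_abs by auto
  then have "\<bar>contrast k1\<bar> * \<bar>contrast k2\<bar> < 1 * 1"
    by (intro mult_strict_mono') auto
  then show ?thesis by (simp add: abs_mult)
qed

lemma hgrad_reflect:
  assumes "hgrad U f H"
  shows "hgrad (uminus ` U) (\<lambda>x. f (- x)) (\<lambda>z. - H (- z))"
  unfolding hgrad_def
proof (intro conjI ballI)
  have U: "open U" "H holomorphic_on U" "\<And>z. z \<in> U \<Longrightarrow> (f has_derivative (\<lambda>h. Re (H z * h))) (at z)"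
    using assms by (auto simp: hgrad_def)
  show "open (uminus ` U)" using U(1) by (rule open_negations)
  have "(H \<circ> uminus) holomorphic_on uminus ` U"
    by (rule holomorphic_on_compose_gen[of uminus "uminus ` U" H U]) (auto intro!: holomorphic_intros U(2))
  then show "(\<lambda>z. - H (- z)) holomorphic_on uminus ` U"
    by (auto simp: o_def intro!: holomorphic_intros)
  show "((\<lambda>x. f (- x)) has_derivative (\<lambda>h. Re (- H (- z) * h))) (at z)" if "z \<in> uminus ` U" for z
  proof -
    have mz: "- z \<in> U" using that by auto
    have d1: "(uminus has_derivative (\<lambda>h. - h)) (at z)" by (auto intro!: derivative_eq_intros)
    have "(f has_derivative (\<lambda>h. Re (H (- z) * h))) (at (- z))" by (rule U(3)[OF mz])
    from has_derivative_compose[OF d1 this]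
    show ?thesis by simp
  qed
qed

lemma hg_reflect: "hg U f \<Longrightarrow> hg (uminus ` U) (\<lambda>x. f (- x))"
  unfolding hg_def using hgrad_reflect by blast

lemma neg_img_iff: "(x::complex) \<in> uminus ` S \<longleftrightarrow> - x \<in> S"
  by (metis image_eqI minus_minus imageE)

lemma neg_image_Bone: "uminus ` Bone \<epsilon> = Btwo \<epsilon>"
proof -
  have "x \<in> uminus ` Bone \<epsilon> \<longleftrightarrow> x \<in> Btwo \<epsilon>" for x
    using neg_Bone[of x \<epsilon>] neg_img_iff[of x "Bone \<epsilon>"] by simp
  then show ?thesis by blast
qed
lemma neg_image_Btwo: "uminus ` Btwo \<epsilon> = Bone \<epsilon>"
proof -
  have "x \<in> uminus ` Btwo \<epsilon> \<longleftrightarrow> x \<in> Bone \<epsilon>" for x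
    using neg_Btwo[of x \<epsilon>] neg_img_iff[of x "Btwo \<epsilon>"] by simp
  then show ?thesis by blast
qed
lemma neg_image_Bzero: "uminus ` Bzero \<epsilon> = Bzero \<epsilon>"
proof -
  have "x \<in> uminus ` Bzero \<epsilon> \<longleftrightarrow> x \<in> Bzero \<epsilon>" for x
    using neg_Bzero[of x \<epsilon>] neg_img_iff[of x "Bzero \<epsilon>"] by simp
  then show ?thesis by blast
qed

lemma sum2:
  fixes c \<beta> :: real
  assumes "summable (\<lambda>l. c^l * a l)" "summable (\<lambda>l. c^l * b l)"
  shows "(\<Sum>l. c^l * (a l - \<beta> * b l)) = (\<Sum>l. c^l * a l) - \<beta> * (\<Sum>l. c^l * b l)"
proof -
  have "(\<lambda>l. c^l * (a l - \<beta> * b l)) = (\<lambda>l. c^l * a l - \<beta> * (c^l * b l))"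
    by (simp add: fun_eq_iff algebra_simps)
  moreover have "(\<Sum>l. c^l * a l - \<beta> * (c^l * b l)) = (\<Sum>l. c^l * a l) - (\<Sum>l. \<beta> * (c^l * b l))"
    by (rule suminf_diff[OF assms(1) summable_mult[OF assms(2)], symmetric])
  moreover have "(\<Sum>l. \<beta> * (c^l * b l)) = \<beta> * (\<Sum>l. c^l * b l)"
    by (rule suminf_mult[OF assms(2)])
  ultimately show ?thesis by simp
qed

lemma sum4:
  fixes c \<alpha> \<beta> :: real
  assumes p: "summable (\<lambda>m. c^m * p m)" and q: "summable (\<lambda>m. c^m * q m)"
    and r: "summable (\<lambda>m. c^m * r m)" and s: "summable (\<lambda>m. c^m * s m)"
  shows "(\<Sum>m. c^(Suc m) * (p m + q m) - c^m * (\<beta> * r m + \<alpha> * s m))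
        = c * (\<Sum>m. c^m * p m) + c * (\<Sum>m. c^m * q m) - \<beta> * (\<Sum>m. c^m * r m) - \<alpha> * (\<Sum>m. c^m * s m)"
proof -
  have eq: "(\<lambda>m. c^(Suc m) * (p m + q m) - c^m * (\<beta> * r m + \<alpha> * s m))
      = (\<lambda>m. (c * (c^m * p m) + c * (c^m * q m)) - (\<beta> * (c^m * r m) + \<alpha> * (c^m * s m)))"
    by (simp add: fun_eq_iff algebra_simps)
  have sp: "summable (\<lambda>m. c * (c^m * p m))" using summable_mult[OF p] .
  have sq: "summable (\<lambda>m. c * (c^m * q m))" using summable_mult[OF q] .
  have sr: "summable (\<lambda>m. \<beta> * (c^m * r m))" using summable_mult[OF r] .
  have ss: "summable (\<lambda>m. \<alpha> * (c^m * s m))" using summable_mult[OF s] .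
  have "(\<Sum>m. (c * (c^m * p m) + c * (c^m * q m)) - (\<beta> * (c^m * r m) + \<alpha> * (c^m * s m)))
      = (\<Sum>m. c * (c^m * p m) + c * (c^m * q m)) - (\<Sum>m. \<beta> * (c^m * r m) + \<alpha> * (c^m * s m))"
    by (rule suminf_diff[OF summable_add[OF sp sq] summable_add[OF sr ss], symmetric])
  also have "\<dots> = ((\<Sum>m. c * (c^m * p m)) + (\<Sum>m. c * (c^m * q m))) - ((\<Sum>m. \<beta> * (c^m * r m)) + (\<Sum>m. \<alpha> * (c^m * s m)))"
    by (simp only: suminf_add[OF sp sq, symmetric] suminf_add[OF sr ss, symmetric])
  also have "\<dots> = c * (\<Sum>m. c^m * p m) + c * (\<Sum>m. c^m * q m) - \<beta> * (\<Sum>m. c^m * r m) - \<alpha> * (\<Sum>m. c^m * s m)"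
    by (simp only: suminf_mult[OF p] suminf_mult[OF q] suminf_mult[OF r] suminf_mult[OF s])
  finally show ?thesis by (simp only: eq)
qed

lemma Bzero_props:
  assumes e: "\<epsilon> > 0" and x: "x \<in> Bzero \<epsilon>"
  shows "1 < cmod (x - complex_of_real (a0 \<epsilon>))" "1 < cmod (x + complex_of_real (a0 \<epsilon>))"
    "x \<in> Om1 \<epsilon>" "x \<in> Om2 \<epsilon>" "x \<noteq> complex_of_real (a0 \<epsilon>)" "psi1 \<epsilon> x \<in> Bone \<epsilon>" "psi1 \<epsilon> x \<in> Om1 \<epsilon>"
proof -
  show a: "1 < cmod (x - complex_of_real (a0 \<epsilon>))" "1 < cmod (x + complex_of_real (a0 \<epsilon>))"
    using x by (auto simp: Bzero_eq)
  then show "x \<in> Om1 \<epsilon>" "x \<in> Om2 \<epsilon>" by (auto simp: Om1_def Om2_def)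
  then show "psi1 \<epsilon> x \<in> Bone \<epsilon>" using psi1_maps[OF e] by blast
  then show "psi1 \<epsilon> x \<in> Om1 \<epsilon>" using Bone_sub_Om1[OF e] by blast
  show "x \<noteq> complex_of_real (a0 \<epsilon>)" using a by auto
qed

lemma Btwo_props:
  assumes e: "\<epsilon> > 0" and x: "x \<in> Btwo \<epsilon>"
  shows "x \<noteq> complex_of_real (a0 \<epsilon>)" "psi1 \<epsilon> x \<in> Om1 \<epsilon>"
proof -
  have "x \<in> Om2 \<epsilon>" using Bone_Om2_disj[OF e x] .
  then show "x \<noteq> complex_of_real (a0 \<epsilon>)" by (auto simp: Om2_def)
  show "psi1 \<epsilon> x \<in> Om1 \<epsilon>" using psi1_maps[OF e \<open>x \<in> Om2 \<epsilon>\<close>] Bone_sub_Om1[OF e] by blast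
qed

lemma open_Bzero: "open (Bzero \<epsilon>)"
  unfolding Bzero_def by (auto intro!: open_Diff)

lemma acoef_Bone: "x \<in> Bone \<epsilon> \<Longrightarrow> acoef \<epsilon> k1 k2 x = k1" by (simp add: acoef_def)
lemma acoef_Btwo: "\<epsilon> > 0 \<Longrightarrow> x \<in> Btwo \<epsilon> \<Longrightarrow> acoef \<epsilon> k1 k2 x = k2"
  using disj_facts(9) by (simp add: acoef_def)
lemma acoef_Bzero: "\<epsilon> > 0 \<Longrightarrow> x \<in> Bzero \<epsilon> \<Longrightarrow> acoef \<epsilon> k1 k2 x = 1"
  using disj_facts(7,8) by (auto simp: acoef_def)


lemma pd_lin4:
  assumes "hg U f1" "hg U f2" "hg U f3" "hg U f4" "z \<in> U"
  shows "pd v (\<lambda>x. a1 * f1 x + a2 * f2 x - a3 * f3 x - a4 * f4 x) z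
       = a1 * pd v f1 z + a2 * pd v f2 z - a3 * pd v f3 z - a4 * pd v f4 z"
proof -
  have h1: "hg U (\<lambda>x. a1 * f1 x)" "hg U (\<lambda>x. a2 * f2 x)" "hg U (\<lambda>x. a3 * f3 x)" "hg U (\<lambda>x. a4 * f4 x)"
    using assms by (auto intro: hg_cmult)
  have h2: "hg U (\<lambda>x. a1 * f1 x + a2 * f2 x)" using h1 by (intro hg_add)
  have h3: "hg U (\<lambda>x. a1 * f1 x + a2 * f2 x - a3 * f3 x)" using h1 h2 by (intro hg_diff)
  show ?thesis
    using pd_diff[OF h3 h1(4) assms(5)] pd_diff[OF h2 h1(3) assms(5)] pd_add[OF h1(1,2) assms(5)]
      pd_cmult[OF assms(1,5)] pd_cmult[OF assms(2,5)] pd_cmult[OF assms(3,5)] pd_cmult[OF assms(4,5)]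
    by simp
qed

lemma pd_lin3:
  assumes "hg U g" "hg U f1" "hg U f3" "z \<in> U"
  shows "pd v (\<lambda>x. b * (g x + a1 * f1 x - a3 * f3 x)) z = b * (pd v g z + a1 * pd v f1 z - a3 * pd v f3 z)"
proof -
  have h1: "hg U (\<lambda>x. a1 * f1 x)" "hg U (\<lambda>x. a3 * f3 x)" using assms by (auto intro: hg_cmult)
  have h2: "hg U (\<lambda>x. g x + a1 * f1 x)" using h1 assms by (intro hg_add)
  have h3: "hg U (\<lambda>x. g x + a1 * f1 x - a3 * f3 x)" using h1 h2 by (intro hg_diff)
  show ?thesis
    using pd_cmult[OF h3 assms(4)] pd_diff[OF h2 h1(2) assms(4)] pd_add[OF assms(1) h1(1) assms(4)]
      pd_cmult[OF assms(2,4)] pd_cmult[OF assms(3,4)]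
    by simp
qed

lemma suminf_neg_pd:
  fixes c :: real
  assumes "summable (\<lambda>l. c^l * p l)" "\<And>l. q l = - p l"
  shows "(\<Sum>l. c^l * q l) = - (\<Sum>l. c^l * p l)" "summable (\<lambda>l. c^l * q l)"
proof -
  have "(\<lambda>l. c^l * q l) = (\<lambda>l. - (c^l * p l))" using assms(2) by (simp add: fun_eq_iff)
  then show "(\<Sum>l. c^l * q l) = - (\<Sum>l. c^l * p l)" "summable (\<lambda>l. c^l * q l)"
    using suminf_minus[OF assms(1)] summable_minus[OF assms(1)] by simp_all
qed

lemma alg_flux1:
  fixes P A B k1 \<beta> :: real
  assumes k1: "k1 > 0"
  shows "P + (contrast k1 * \<beta> * A + contrast k1 * \<beta> * (- B) - \<beta> * B - contrast k1 * (- (P + contrast k1 * \<beta> * A)))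
     = k1 * (2 / (k1 + 1) * (P + contrast k1 * \<beta> * A - \<beta> * B))"
proof -
  have h3: "k1 * (2 / (k1 + 1)) = 1 + contrast k1" using k1 by (simp add: contrast_def field_simps)
  have "k1 * (2 / (k1 + 1) * (P + contrast k1 * \<beta> * A - \<beta> * B)) = (1 + contrast k1) * (P + contrast k1 * \<beta> * A - \<beta> * B)"
    by (simp only: mult.assoc[symmetric] h3)
  then show ?thesis by (simp add: algebra_simps)
qed

lemma tdata_pd:
  assumes N: "open N" "x0 \<in> N" and h0: "hg N Q0" and h1: "hg N Q1"
    and e0: "\<And>x. x \<in> N \<Longrightarrow> x \<in> Bzero \<epsilon> \<Longrightarrow> f x = Q0 x"
    and e1: "\<And>x. x \<in> N \<Longrightarrow> x \<in> ball c 1 \<Longrightarrow> f x = Q1 x"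
    and a1: "\<And>x. x \<in> ball c 1 \<Longrightarrow> acoef \<epsilon> k1 k2 x = k"
    and a0: "\<And>x. x \<in> Bzero \<epsilon> \<Longrightarrow> acoef \<epsilon> k1 k2 x = 1"
    and val: "Q0 x0 = Q1 x0"
    and flux: "pd (x0 - c) Q0 x0 = k * pd (x0 - c) Q1 x0"
    and x0: "cmod (x0 - c) = 1"
  shows "transmission \<epsilon> k1 k2 c x0 f"
proof -
  obtain H0 H1 where H0: "hgrad N Q0 H0" and H1: "hgrad N Q1 H1" using h0 h1 unfolding hg_def by blast
  show ?thesis
  proof (rule tdata_transmission[OF N H0 H1 e0 e1 a1 a0 val _ x0 open_Bzero])
    show "Re (H0 x0 * (x0 - c)) = k * Re (H1 x0 * (x0 - c))"
      using flux hgrad_pd[OF H0 N(2)] hgrad_pd[OF H1 N(2)] by simp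
  qed auto
qed

lemma sphere1_iff: "x0 \<in> sphere (cen1 \<epsilon>) 1 \<longleftrightarrow> cmod (x0 - complex_of_real (a0 \<epsilon>)) = 1"
  by (simp add: cen1_def dist_norm norm_minus_commute)

lemma ball_cen1: "ball (cen1 \<epsilon>) 1 = Bone \<epsilon>" by (simp add: Bone_def)

lemma Tm2_app: "Tm2 \<epsilon> x = Phi2 \<epsilon> (Phi1 \<epsilon> x)" by (simp add: P21_eq[symmetric])

lemma Tm2_sphere: "cmod (x0 - complex_of_real (a0 \<epsilon>)) = 1 \<Longrightarrow> Tm2 \<epsilon> x0 = Phi2 \<epsilon> x0"
  by (simp only: Tm2_app Phi1_sphere)

lemma B1_refl: "(\<lambda>x. Lg y ((Tm2 \<epsilon> ^^ Suc m) x)) = (\<lambda>x. (\<lambda>w. Lg y ((Tm2 \<epsilon> ^^ m) (Phi2 \<epsilon> w))) (Phi1 \<epsilon> x))"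
proof -
  have "(Tm2 \<epsilon> ^^ Suc m) x = (Tm2 \<epsilon> ^^ m) (Phi2 \<epsilon> (Phi1 \<epsilon> x))" for x
    by (simp only: funpow_Suc_right comp_apply Tm2_app)
  then show ?thesis by simp
qed

lemma pd_refl_hg:
  assumes "hg N f" "x0 \<in> N" "cmod (x0 - complex_of_real (a0 \<epsilon>)) = 1"
  shows "pd (x0 - complex_of_real (a0 \<epsilon>)) (\<lambda>x. f (Phi1 \<epsilon> x)) x0 = - pd (x0 - complex_of_real (a0 \<epsilon>)) f x0"
proof -
  obtain H where "(f has_derivative (\<lambda>h. Re (H * h))) (at x0)" using hg_deriv[OF assms(1,2)] by blast
  then show ?thesis by (rule pd_refl[OF _ assms(3)])
qed


definition tdat :: "real \<Rightarrow> complex \<Rightarrow> complex \<Rightarrow> (complex \<Rightarrow> real) \<Rightarrow> real \<Rightarrow> bool" where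
  "tdat \<epsilon> c x0 f k \<longleftrightarrow> (\<exists>N Q0 Q1. open N \<and> x0 \<in> N \<and> hg N Q0 \<and> hg N Q1 \<and>
     (\<forall>x. x \<in> N \<longrightarrow> x \<in> Bzero \<epsilon> \<longrightarrow> f x = Q0 x) \<and> (\<forall>x. x \<in> N \<longrightarrow> x \<in> ball c 1 \<longrightarrow> f x = Q1 x) \<and>
     Q0 x0 = Q1 x0 \<and> pd (x0 - c) Q0 x0 = k * pd (x0 - c) Q1 x0 \<and> cmod (x0 - c) = 1)"

lemma tdat_intro:
  assumes N: "open N" "x0 \<in> N" and h0: "hg N Q0" and h1: "hg N Q1"
    and e0: "\<And>x. x \<in> N \<Longrightarrow> x \<in> Bzero \<epsilon> \<Longrightarrow> f x = Q0 x"
    and e1: "\<And>x. x \<in> N \<Longrightarrow> x \<in> ball c 1 \<Longrightarrow> f x = Q1 x"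
    and val: "Q0 x0 = Q1 x0"
    and flux: "pd (x0 - c) Q0 x0 = k * pd (x0 - c) Q1 x0"
    and x0: "cmod (x0 - c) = 1"
  shows "tdat \<epsilon> c x0 f k"
  unfolding tdat_def using assms by blast

lemma tdat_trans:
  assumes "tdat \<epsilon> c x0 f k" "\<And>x. x \<in> ball c 1 \<Longrightarrow> acoef \<epsilon> k1 k2 x = k" "\<epsilon> > 0"
  shows "transmission \<epsilon> k1 k2 c x0 f"
proof -
  obtain N Q0 Q1 where N: "open N" "x0 \<in> N" "hg N Q0" "hg N Q1"
     "\<forall>x. x \<in> N \<longrightarrow> x \<in> Bzero \<epsilon> \<longrightarrow> f x = Q0 x" "\<forall>x. x \<in> N \<longrightarrow> x \<in> ball c 1 \<longrightarrow> f x = Q1 x"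
     "Q0 x0 = Q1 x0" "pd (x0 - c) Q0 x0 = k * pd (x0 - c) Q1 x0" "cmod (x0 - c) = 1"
    using assms(1) unfolding tdat_def by blast
  show ?thesis
    by (rule tdata_pd[OF N(1-4) _ _ assms(2) acoef_Bzero[OF assms(3)] N(7-9)]) (use N(5,6) in auto)
qed

lemma pd_neg: "pd v (\<lambda>x. f (- x)) z = pd (- v) f (- z)"
  unfolding pd_def by (simp add: algebra_simps)

lemma tdat_reflect:
  assumes "tdat \<epsilon> c x0 f k"
  shows "tdat \<epsilon> (- c) (- x0) (\<lambda>x. f (- x)) k"
proof -
  obtain N Q0 Q1 where N: "open N" "x0 \<in> N" "hg N Q0" "hg N Q1"
     "\<forall>x. x \<in> N \<longrightarrow> x \<in> Bzero \<epsilon> \<longrightarrow> f x = Q0 x" "\<forall>x. x \<in> N \<longrightarrow> x \<in> ball c 1 \<longrightarrow> f x = Q1 x"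
     "Q0 x0 = Q1 x0" "pd (x0 - c) Q0 x0 = k * pd (x0 - c) Q1 x0" "cmod (x0 - c) = 1"
    using assms(1) unfolding tdat_def by blast
  show ?thesis
  proof (rule tdat_intro[of "uminus ` N" _ "\<lambda>x. Q0 (- x)" "\<lambda>x. Q1 (- x)"])
    show "open (uminus ` N)" using N(1) by (rule open_negations)
    show "- x0 \<in> uminus ` N" using N(2) by simp
    show "hg (uminus ` N) (\<lambda>x. Q0 (- x))" using hg_reflect[OF N(3)] .
    show "hg (uminus ` N) (\<lambda>x. Q1 (- x))" using hg_reflect[OF N(4)] .
    show "f (- x) = Q0 (- x)" if "x \<in> uminus ` N" "x \<in> Bzero \<epsilon>" for x
      using N(5) that neg_img_iff[of x N] neg_Bzero[of x \<epsilon>] by auto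
    show "f (- x) = Q1 (- x)" if "x \<in> uminus ` N" "x \<in> ball (- c) 1" for x
    proof -
      have "- x \<in> ball c 1" using that(2) by (simp add: dist_norm norm_minus_commute) (metis minus_diff_eq norm_minus_cancel add.commute diff_conv_add_uminus)
      then show ?thesis using N(6) that(1) neg_img_iff[of x N] by auto
    qed
    show "Q0 (- (- x0)) = Q1 (- (- x0))" using N(7) by simp
    show "pd (- x0 - - c) (\<lambda>x. Q0 (- x)) (- x0) = k * pd (- x0 - - c) (\<lambda>x. Q1 (- x)) (- x0)"
      using N(8) by (simp add: pd_neg)
    show "cmod (- x0 - - c) = 1" using N(9) by (simp add: norm_minus_commute)
  qed
qed

context
  fixes \<epsilon> k1 k2 :: real and y :: complex
  assumes e: "\<epsilon> > 0" and k1: "k1 > 0" and k2: "k2 > 0" and y: "y \<in> Bzero \<epsilon>"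
begin

abbreviation "cc \<equiv> contrast k1 * contrast k2"
abbreviation "A1 \<equiv> \<lambda>m x. Lg y ((Tm1 \<epsilon> ^^ Suc m) x)"
abbreviation "B1 \<equiv> \<lambda>m x. Lg y ((Tm2 \<epsilon> ^^ Suc m) x)"
abbreviation "Bh \<equiv> \<lambda>l x. Lg y ((Tm2 \<epsilon> ^^ l) (Phi2 \<epsilon> x))"
abbreviation "Ah \<equiv> \<lambda>l x. Lg y ((Tm1 \<epsilon> ^^ l) (Phi1 \<epsilon> x))"
abbreviation "SS \<equiv> \<lambda>\<phi> x. \<Sum>l. cc^l * \<phi> l x"
abbreviation "F1 \<equiv> \<lambda>x. 2 / (k1 + 1) * (Lg y x + cc * SS A1 x - contrast k2 * SS Bh x)"
abbreviation "G0' \<equiv> \<lambda>x. cc * SS A1 x + cc * SS B1 x - contrast k2 * SS Bh x - contrast k1 * SS Ah x"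

lemma c1_y: "1 < cmod (y - complex_of_real (a0 \<epsilon>))" "1 < cmod (y + complex_of_real (a0 \<epsilon>))"
  using Bzero_props[OF e y] by auto

lemma c1_cc: "\<bar>cc\<bar> < 1" using c_abs[OF k1 k2] .

lemma c1_eq1:
  assumes x: "x \<in> closure (Bone \<epsilon>)" and sA: "summable (\<lambda>m. cc^m * A1 m x)" and sB: "summable (\<lambda>l. cc^l * Bh l x)"
  shows "Gfun \<epsilon> k1 k2 x y = F1 x"
proof -
  have sA': "summable (\<lambda>l. cc^l * Lg y ((Tm1 \<epsilon> ^^ l) x))"
    using sum_head_summable[of cc "\<lambda>l. Lg y ((Tm1 \<epsilon> ^^ l) x)"] sA by simp
  have h: "(\<Sum>l. cc^l * Lg y ((Tm1 \<epsilon> ^^ l) x)) = Lg y x + cc * SS A1 x"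
    using sum_head[of cc "\<lambda>l. Lg y ((Tm1 \<epsilon> ^^ l) x)"] sA by simp
  show ?thesis
    using GB0_one[OF e y x, of k1 k2] sum2[OF sA' sB, of "contrast k2"] h by simp
qed

lemma c1_eq0:
  assumes x: "x \<in> Bzero \<epsilon>" and s1: "summable (\<lambda>m. cc^m * A1 m x)" and s2: "summable (\<lambda>m. cc^m * B1 m x)"
    and s3: "summable (\<lambda>m. cc^m * Bh m x)" and s4: "summable (\<lambda>m. cc^m * Ah m x)"
  shows "Gfun \<epsilon> k1 k2 x y = Lg y x + G0' x"
  using GB0_zero[OF e y x, of k1 k2] sum4[OF s1 s2 s3 s4, of "contrast k2" "contrast k1"] by simp

lemma oBone: "open (Bone \<epsilon>)" by (simp add: Bone_eq)

lemma c1_famBone: "gfam (Bone \<epsilon>) cc A1" "gfam (Bone \<epsilon>) cc Bh"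
  using FA1[OF e c1_y(1) oBone Bone_sub_Om1'[OF e] c1_cc]
    FBhat[OF e c1_y(2) oBone Bone_sub_Om1'[OF e] c1_cc] by auto

lemma c1_harm_Bone: "hg (Bone \<epsilon>) (\<lambda>x. Gfun \<epsilon> k1 k2 x y)"
proof -
  have oB: "open (Bone \<epsilon>)" by (simp add: Bone_eq)
  have L: "hg (Bone \<epsilon>) (\<lambda>x. Lg y x)"
    using SL[OF oB, of y] disj_facts(7)[OF e] y unfolding hg_def by blast
  have "hg (Bone \<epsilon>) F1"
    by (intro hg_cmult hg_add hg_diff L hg_gfam c1_famBone)
  then have "hg (Bone \<epsilon>) (\<lambda>x. Gfun \<epsilon> k1 k2 x y)"
  proof (rule hg_cong)
    fix x assume x: "x \<in> Bone \<epsilon>"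
    show "F1 x = Gfun \<epsilon> k1 k2 x y"
      by (rule c1_eq1[symmetric]) (use x disj_facts(5)[OF e] gfam_summable[OF c1_famBone(1)] gfam_summable[OF c1_famBone(2)] in auto)
  qed
  then show ?thesis .
qed

lemma c1_famBzero: "gfam (Bzero \<epsilon>) cc A1" "gfam (Bzero \<epsilon>) cc B1" "gfam (Bzero \<epsilon>) cc Bh" "gfam (Bzero \<epsilon>) cc Ah"
proof -
  have sub: "Bzero \<epsilon> \<subseteq> Om1 \<epsilon>" using Bzero_props[OF e] by blast
  show "gfam (Bzero \<epsilon>) cc A1" by (rule FA1[OF e c1_y(1) open_Bzero sub c1_cc])
  show "gfam (Bzero \<epsilon>) cc Bh" by (rule FBhat[OF e c1_y(2) open_Bzero sub c1_cc])
  show "gfam (Bzero \<epsilon>) cc B1" by (rule FB1[OF e c1_y(2) open_Bzero _ c1_cc]) (use Bzero_props[OF e] in auto)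
  show "gfam (Bzero \<epsilon>) cc Ah"
  proof (rule FAhat[OF e c1_y(1) open_Bzero _ c1_cc])
    fix x assume x: "x \<in> Bzero \<epsilon>"
    have "Phi1 \<epsilon> x \<noteq> y"
    proof
      assume "Phi1 \<epsilon> x = y"
      then have "cnj (psi1 \<epsilon> x) = y" by (simp add: Phi1_psi)
      moreover have "psi1 \<epsilon> x \<in> Bone \<epsilon>" using Bzero_props[OF e x] by simp
      moreover have "y - complex_of_real (a0 \<epsilon>) = cnj (psi1 \<epsilon> x - complex_of_real (a0 \<epsilon>))"
        using \<open>cnj (psi1 \<epsilon> x) = y\<close> by auto
      ultimately have "cmod (y - complex_of_real (a0 \<epsilon>)) < 1"
        by (simp only: complex_mod_cnj mem_Bone)
      then show False using c1_y by simp
    qed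
    then show "x \<noteq> complex_of_real (a0 \<epsilon>) \<and> psi1 \<epsilon> x \<in> Om1 \<epsilon> \<and> Phi1 \<epsilon> x \<noteq> y"
      using Bzero_props[OF e x] by simp
  qed
qed

lemma c1_harm_Bzero: "hg (Bzero \<epsilon>) (\<lambda>x. Gfun \<epsilon> k1 k2 x y - ln (cmod (x - y)))"
proof -
  have "hg (Bzero \<epsilon>) G0'"
    by (intro hg_cmult hg_add hg_diff hg_gfam c1_famBzero)
  then have "hg (Bzero \<epsilon>) (\<lambda>x. Gfun \<epsilon> k1 k2 x y - ln (cmod (x - y)))"
  proof (rule hg_cong)
    fix x assume x: "x \<in> Bzero \<epsilon>"
    show "G0' x = Gfun \<epsilon> k1 k2 x y - ln (cmod (x - y))"
      using c1_eq0[OF x gfam_summable[OF c1_famBzero(1) x] gfam_summable[OF c1_famBzero(2) x]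
          gfam_summable[OF c1_famBzero(3) x] gfam_summable[OF c1_famBzero(4) x]]
      by (simp add: Lg_def)
  qed
  then show ?thesis .
qed


lemma c1_famN: "gfam (Nset \<epsilon> y) cc A1" "gfam (Nset \<epsilon> y) cc B1" "gfam (Nset \<epsilon> y) cc Bh"
  "gfam (Nset \<epsilon> y) cc Ah" "hg (Nset \<epsilon> y) (\<lambda>x. Lg y x)"
proof -
  have sub: "Nset \<epsilon> y \<subseteq> Om1 \<epsilon>" using Nset_props by blast
  show "gfam (Nset \<epsilon> y) cc A1" by (rule FA1[OF e c1_y(1) open_Nset sub c1_cc])
  show "gfam (Nset \<epsilon> y) cc Bh" by (rule FBhat[OF e c1_y(2) open_Nset sub c1_cc])
  show "gfam (Nset \<epsilon> y) cc B1" by (rule FB1[OF e c1_y(2) open_Nset _ c1_cc]) (use Nset_props in auto)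
  show "gfam (Nset \<epsilon> y) cc Ah" by (rule FAhat[OF e c1_y(1) open_Nset _ c1_cc]) (use Nset_props in auto)
  have "\<exists>H. hgrad (Nset \<epsilon> y) (\<lambda>x. Lg y x) H" by (rule SL[OF open_Nset]) (use Nset_props in blast)
  then show "hg (Nset \<epsilon> y) (\<lambda>x. Lg y x)" unfolding hg_def .
qed

lemma c1_trans1:
  assumes x0: "x0 \<in> sphere (cen1 \<epsilon>) 1"
  shows "tdat \<epsilon> (cen1 \<epsilon>) x0 (\<lambda>x. Gfun \<epsilon> k1 k2 x y) k1"
proof -
  have x0': "cmod (x0 - complex_of_real (a0 \<epsilon>)) = 1" using x0 sphere1_iff by blast
  define N where "N = Nset \<epsilon> y"
  have yne: "cmod (y - complex_of_real (a0 \<epsilon>)) \<noteq> 1" using c1_y by simp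
  have x0N: "x0 \<in> N" using x0_in_Nset[OF e x0' yne] N_def by simp
  have oN: "open N" unfolding N_def by (rule open_Nset)
  note fam = c1_famN[folded N_def]
  have hs: "hg N (SS A1)" "hg N (SS B1)" "hg N (SS Bh)" "hg N (SS Ah)"
    using hg_gfam[OF fam(1)] hg_gfam[OF fam(2)] hg_gfam[OF fam(3)] hg_gfam[OF fam(4)] by auto
  have hL: "hg N (Lg y)" using fam(5) by simp
  define F0 where "F0 = (\<lambda>x. Lg y x + G0' x)"
  have hF1: "hg N F1" by (intro hg_cmult hg_add hg_diff hL hs)
  have hG0: "hg N G0'" by (intro hg_cmult hg_add hg_diff hs)
  have hF0: "hg N F0" unfolding F0_def by (intro hg_add hL hG0)
  have cen: "cen1 \<epsilon> = complex_of_real (a0 \<epsilon>)" by (simp add: cen1_def)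
  define n where "n = x0 - complex_of_real (a0 \<epsilon>)"
  have sA: "summable (\<lambda>m. cc^m * A1 m x0)" using gfam_summable[OF fam(1) x0N] .
  have Ah0: "Ah l x0 = Lg y ((Tm1 \<epsilon> ^^ l) x0)" for l by (simp add: Phi1_sphere[OF x0'])
  have SAh: "SS Ah x0 = Lg y x0 + cc * SS A1 x0"
    using sum_head[of cc "\<lambda>l. Lg y ((Tm1 \<epsilon> ^^ l) x0)"] sA by (simp add: Ah0)
  have B1h: "B1 m x0 = Bh m x0" for m by (simp add: funpow_swap1 Tm2_sphere[OF x0'])
  have SB1: "SS B1 x0 = SS Bh x0" by (simp only: B1h)
  have h2: "2 / (k1 + 1) = 1 - contrast k1" using k1 by (simp add: contrast_def field_simps)
  have h3: "k1 * (2 / (k1 + 1)) = 1 + contrast k1" using k1 by (simp add: contrast_def field_simps)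
  show ?thesis
  proof (rule tdat_intro[OF oN x0N hF0 hF1])
    show "Gfun \<epsilon> k1 k2 x y = F0 x" if "x \<in> N" "x \<in> Bzero \<epsilon>" for x
      unfolding F0_def
      by (rule c1_eq0[OF that(2) gfam_summable[OF fam(1) that(1)] gfam_summable[OF fam(2) that(1)]
            gfam_summable[OF fam(3) that(1)] gfam_summable[OF fam(4) that(1)]])
    show "Gfun \<epsilon> k1 k2 x y = F1 x" if "x \<in> N" "x \<in> ball (cen1 \<epsilon>) 1" for x
      by (rule c1_eq1) (use that ball_cen1 disj_facts(5)[OF e] gfam_summable[OF fam(1)] gfam_summable[OF fam(3)] in auto)
    show "cmod (x0 - cen1 \<epsilon>) = 1" using x0' by (simp add: cen)
    show "F0 x0 = F1 x0"
      unfolding F0_def SAh SB1 h2 by (simp add: algebra_simps)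
    have pA: "pd n (SS A1) x0 = (\<Sum>m. cc^m * pd n (A1 m) x0)" "summable (\<lambda>m. cc^m * pd n (A1 m) x0)"
      using gfam_pd[OF fam(1) x0N, of n] by auto
    have pBh: "pd n (SS Bh) x0 = (\<Sum>m. cc^m * pd n (Bh m) x0)" "summable (\<lambda>m. cc^m * pd n (Bh m) x0)"
      using gfam_pd[OF fam(3) x0N, of n] by auto
    have pB1e: "pd n (B1 m) x0 = - pd n (Bh m) x0" for m
    proof -
      have "pd n (B1 m) x0 = pd n (\<lambda>x. Bh m (Phi1 \<epsilon> x)) x0" by (subst B1_refl) simp
      also have "\<dots> = - pd n (Bh m) x0"
        unfolding n_def by (rule pd_refl_hg[OF hg_gfam_term[OF fam(3)] x0N x0'])
      finally show ?thesis .
    qed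
    have pB1: "pd n (SS B1) x0 = - pd n (SS Bh) x0"
      using gfam_pd(1)[OF fam(2) x0N, of n] suminf_neg_pd(1)[OF pBh(2) pB1e] pBh(1) by simp
    have pAhe: "pd n (Ah l) x0 = - pd n (\<lambda>x. Lg y ((Tm1 \<epsilon> ^^ l) x)) x0" for l
    proof -
      have hl: "hg N (\<lambda>x. Lg y ((Tm1 \<epsilon> ^^ l) x))"
      proof (cases l)
        case 0 then show ?thesis using hL by simp
      next
        case (Suc m) then show ?thesis using hg_gfam_term[OF fam(1), of m] by simp
      qed
      show ?thesis unfolding n_def by (rule pd_refl_hg[OF hl x0N x0'])
    qed
    have pAh: "pd n (SS Ah) x0 = - (pd n (Lg y) x0 + cc * pd n (SS A1) x0)"
    proof -
      have s: "summable (\<lambda>m. cc^m * pd n (Ah (Suc m)) x0)"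
        by (rule suminf_neg_pd(2)[OF pA(2)]) (rule pAhe)
      have "pd n (SS Ah) x0 = (\<Sum>l. cc^l * pd n (Ah l) x0)" using gfam_pd(1)[OF fam(4) x0N] .
      also have "\<dots> = pd n (Ah 0) x0 + cc * (\<Sum>m. cc^m * pd n (Ah (Suc m)) x0)"
        by (rule sum_head[OF s])
      also have "(\<Sum>m. cc^m * pd n (Ah (Suc m)) x0) = - (\<Sum>m. cc^m * pd n (A1 m) x0)"
        by (rule suminf_neg_pd(1)[OF pA(2)]) (rule pAhe)
      finally show ?thesis using pAhe[of 0] pA(1) by simp
    qed
    have pF0: "pd n F0 x0 = pd n (Lg y) x0 + (cc * pd n (SS A1) x0 + cc * pd n (SS B1) x0
        - contrast k2 * pd n (SS Bh) x0 - contrast k1 * pd n (SS Ah) x0)"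
      unfolding F0_def
      using pd_add[OF hL hG0 x0N] pd_lin4[OF hs x0N, of n cc cc "contrast k2" "contrast k1"] by simp
    have pF1: "pd n F1 x0 = 2 / (k1 + 1) * (pd n (Lg y) x0 + cc * pd n (SS A1) x0 - contrast k2 * pd n (SS Bh) x0)"
      using pd_lin3[OF hL hs(1) hs(3) x0N, of n "2 / (k1 + 1)" cc "contrast k2"] by simp
    show "pd (x0 - cen1 \<epsilon>) F0 x0 = k1 * pd (x0 - cen1 \<epsilon>) F1 x0"
      unfolding cen n_def[symmetric] pF0 pF1 pB1 pAh
      by (rule alg_flux1[OF k1])
  qed
qed

end


lemma pd_lin_b:
  assumes "hg U g" "hg U h" "hg U f" "z \<in> U"
  shows "pd v (\<lambda>x. b * (g x + a1 * h x) - d * f x) z = b * (pd v g z + a1 * pd v h z) - d * pd v f z"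
proof -
  have h1: "hg U (\<lambda>x. a1 * h x)" "hg U (\<lambda>x. d * f x)" using assms by (auto intro: hg_cmult)
  have h2: "hg U (\<lambda>x. g x + a1 * h x)" using h1 assms by (intro hg_add)
  have h3: "hg U (\<lambda>x. b * (g x + a1 * h x))" using h2 by (intro hg_cmult)
  show ?thesis
    using pd_diff[OF h3 h1(2) assms(4)] pd_cmult[OF h2 assms(4)] pd_add[OF assms(1) h1(1) assms(4)]
      pd_cmult[OF assms(2,4)] pd_cmult[OF assms(3,4)]
    by simp
qed

lemma one_lt_inv: "0 < r \<Longrightarrow> r < 1 \<Longrightarrow> 1 < 1 / (r::real)" by (simp add: less_divide_eq)

lemma alg_u:
  fixes k1 :: real
  assumes k1: "k1 > 0"
  shows "contrast k1 = 1 - 2 / (k1 + 1)" "1 + contrast k1 = k1 * (2 / (k1 + 1))"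
    "4 / (k1 + 1)^2 = (2 / (k1 + 1))^2" "(k1 + 1) * (2 / (k1 + 1)) = 2"
  using k1 by (simp_all add: contrast_def field_simps power2_eq_square)

lemma alg_val2:
  fixes L B k1 \<beta> :: real
  assumes k1: "k1 > 0"
  shows "2 / (k1 + 1) * (L + contrast k1 * \<beta> * B - \<beta> * B)
     = 1 / k1 * (L + contrast k1 * L) - 4 * \<beta> / (k1 + 1)^2 * B"
proof -
  define u where "u = 2 / (k1 + 1)"
  note h = alg_u[OF k1, folded u_def]
  have "1 / k1 * (L + contrast k1 * L) = 1 / k1 * ((1 + contrast k1) * L)" by (simp add: algebra_simps)
  also have "\<dots> = u * L" by (simp only: h(2)) (use k1 in simp)
  finally have r1: "1 / k1 * (L + contrast k1 * L) = u * L" .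
  have r2: "4 * \<beta> / (k1 + 1)^2 * B = \<beta> * u^2 * B"
    using h(3) by (simp add: divide_inverse)
  show ?thesis unfolding r1 r2 unfolding u_def[symmetric] unfolding h(1) by (simp add: algebra_simps power2_eq_square)
qed

lemma alg_flux2:
  fixes P B k1 \<beta> :: real
  assumes k1: "k1 > 0"
  shows "2 / (k1 + 1) * (P + contrast k1 * \<beta> * (- B) - \<beta> * B)
     = k1 * (1 / k1 * (P + contrast k1 * (- P)) - 4 * \<beta> / (k1 + 1)^2 * B)"
proof -
  define u where "u = 2 / (k1 + 1)"
  note h = alg_u[OF k1, folded u_def]
  have r1: "k1 * (1 / k1 * (P + contrast k1 * (- P))) = u * P" using k1 by (simp add: h(1) algebra_simps)
  have r2: "4 * \<beta> / (k1 + 1)^2 * B = \<beta> * u^2 * B"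
    using h(3) by (simp add: divide_inverse)
  have "u * u * k1 = u * ((k1 + 1) * u) - u * u" by (simp add: algebra_simps)
  then have r3: "u * u * k1 = 2 * u - u * u" unfolding h(4) by simp
  have "k1 * (1 / k1 * (P + contrast k1 * (- P)) - 4 * \<beta> / (k1 + 1)^2 * B) = u * P - \<beta> * B * (u * u * k1)"
    unfolding right_diff_distrib r1 r2 by (simp add: power2_eq_square algebra_simps)
  also have "\<dots> = u * P - \<beta> * B * (2 * u - u * u)" unfolding r3 ..
  finally show ?thesis unfolding u_def[symmetric] unfolding h(1) by (simp add: algebra_simps)
qed

context
  fixes \<epsilon> k1 k2 :: real and y :: complex
  assumes e: "\<epsilon> > 0" and k1: "k1 > 0" and k2: "k2 > 0" and y: "y \<in> Bone \<epsilon>"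
begin

abbreviation "cc2 \<equiv> contrast k1 * contrast k2"
abbreviation "B1b \<equiv> \<lambda>m x. Lg y ((Tm2 \<epsilon> ^^ Suc m) x)"
abbreviation "Bhb \<equiv> \<lambda>l x. Lg y ((Tm2 \<epsilon> ^^ l) (Phi2 \<epsilon> x))"
abbreviation "SS2 \<equiv> \<lambda>\<phi> x. \<Sum>l. cc2^l * \<phi> l x"

lemma c2_y: "1 < cmod (y + complex_of_real (a0 \<epsilon>))" "cmod (y - complex_of_real (a0 \<epsilon>)) < 1"
  using sep1[OF e, of y 1] a0_gt[OF e] y by (auto simp: mem_Bone)

lemma c2_cc: "\<bar>cc2\<bar> < 1" using c_abs[OF k1 k2] .

lemma c2_sumB:
  assumes s: "summable (\<lambda>m. cc2^m * B1b m x)"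
  shows "(\<Sum>l. cc2^l * Lg y ((Tm2 \<epsilon> ^^ l) x)) = Lg y x + cc2 * SS2 B1b x"
    "summable (\<lambda>l. cc2^l * Lg y ((Tm2 \<epsilon> ^^ l) x))"
  using sum_head[of cc2 "\<lambda>l. Lg y ((Tm2 \<epsilon> ^^ l) x)"] sum_head_summable[of cc2 "\<lambda>l. Lg y ((Tm2 \<epsilon> ^^ l) x)"] s
  by simp_all

lemma c2_eq0:
  assumes x: "x \<in> Bzero \<epsilon>" and s1: "summable (\<lambda>m. cc2^m * B1b m x)" and s2: "summable (\<lambda>l. cc2^l * Bhb l x)"
  shows "Gfun \<epsilon> k1 k2 x y = 2 / (k1 + 1) * (Lg y x + cc2 * SS2 B1b x - contrast k2 * SS2 Bhb x)"
  using GB1_zero[OF e y x, of k1 k2] sum2[OF c2_sumB(2)[OF s1] s2, of "contrast k2"] c2_sumB(1)[OF s1] by simp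

lemma c2_eq2:
  assumes x: "x \<in> closure (Btwo \<epsilon>)" and s1: "summable (\<lambda>m. cc2^m * B1b m x)"
  shows "Gfun \<epsilon> k1 k2 x y = 4 / ((k1 + 1) * (k2 + 1)) * (Lg y x + cc2 * SS2 B1b x)"
  using GB1_two[OF e y x, of k1 k2] c2_sumB(1)[OF s1] by simp

lemma Phi1_ne_y:
  assumes "x \<noteq> complex_of_real (a0 \<epsilon>)" "cmod (x - complex_of_real (a0 \<epsilon>)) < 1"
  shows "Phi1 \<epsilon> x \<noteq> y"
proof
  assume h: "Phi1 \<epsilon> x = y"
  have "Phi1 \<epsilon> x - complex_of_real (a0 \<epsilon>) = cnj (psi1 \<epsilon> x - complex_of_real (a0 \<epsilon>))" by (simp add: Phi1_psi)
  then have "cmod (Phi1 \<epsilon> x - complex_of_real (a0 \<epsilon>)) = 1 / cmod (x - complex_of_real (a0 \<epsilon>))"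
    by (simp only: complex_mod_cnj norm_psi1)
  moreover have "1 / cmod (x - complex_of_real (a0 \<epsilon>)) > 1"
    using assms one_lt_inv[of "cmod (x - complex_of_real (a0 \<epsilon>))"] by simp
  ultimately show False using h c2_y(2) by simp
qed

lemma c2_harm_Bone: "hg (Bone \<epsilon> - {cen1 \<epsilon>}) (\<lambda>x. Gfun \<epsilon> k1 k2 x y - 1 / k1 * ln (cmod (x - y)))"
proof -
  define U where "U = Bone \<epsilon> - {cen1 \<epsilon>}"
  have oU: "open U" unfolding U_def by (simp add: Bone_eq open_Diff)
  have Ux: "x \<noteq> complex_of_real (a0 \<epsilon>) \<and> Phi1 \<epsilon> x \<noteq> y" if "x \<in> U" for x
    using that Phi1_ne_y by (auto simp: U_def cen1_def mem_Bone)
  have hP: "hg U (\<lambda>x. Lg y (Phi1 \<epsilon> x))" using SLPhi[OF oU Ux] unfolding hg_def .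
  have sub: "U \<subseteq> Om1 \<epsilon>" using Bone_sub_Om1'[OF e] by (auto simp: U_def)
  have fB: "gfam U cc2 Bhb" by (rule FBhat[OF e c2_y(1) oU sub c2_cc])
  have "hg U (\<lambda>x. 1 / k1 * contrast k1 * Lg y (Phi1 \<epsilon> x) - 4 * contrast k2 / (k1 + 1)^2 * SS2 Bhb x)"
    by (intro hg_diff hg_cmult hP hg_gfam fB)
  then have "hg U (\<lambda>x. Gfun \<epsilon> k1 k2 x y - 1 / k1 * ln (cmod (x - y)))"
  proof (rule hg_cong)
    fix x assume "x \<in> U"
    then have x: "x \<in> closure (Bone \<epsilon>)" using disj_facts(5)[OF e] by (auto simp: U_def)
    show "1 / k1 * contrast k1 * Lg y (Phi1 \<epsilon> x) - 4 * contrast k2 / (k1 + 1)^2 * SS2 Bhb x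
        = Gfun \<epsilon> k1 k2 x y - 1 / k1 * ln (cmod (x - y))"
      unfolding GB1_one[OF e y x] by (simp add: Lg_def algebra_simps)
  qed
  then show ?thesis by (simp add: U_def)
qed

lemma c2_harm_Bzero: "hg (Bzero \<epsilon>) (\<lambda>x. Gfun \<epsilon> k1 k2 x y)"
proof -
  have sub: "Bzero \<epsilon> \<subseteq> Om1 \<epsilon>" using Bzero_props[OF e] by blast
  have fB: "gfam (Bzero \<epsilon>) cc2 Bhb" by (rule FBhat[OF e c2_y(1) open_Bzero sub c2_cc])
  have f1: "gfam (Bzero \<epsilon>) cc2 B1b" by (rule FB1[OF e c2_y(1) open_Bzero _ c2_cc]) (use Bzero_props[OF e] in auto)
  have "\<exists>H. hgrad (Bzero \<epsilon>) (\<lambda>x. Lg y x) H" by (rule SL[OF open_Bzero]) (use disj_facts(7)[OF e] y in blast)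
  then have hL: "hg (Bzero \<epsilon>) (\<lambda>x. Lg y x)" unfolding hg_def .
  have "hg (Bzero \<epsilon>) (\<lambda>x. 2 / (k1 + 1) * (Lg y x + cc2 * SS2 B1b x - contrast k2 * SS2 Bhb x))"
    by (intro hg_cmult hg_add hg_diff hL hg_gfam fB f1)
  then have "hg (Bzero \<epsilon>) (\<lambda>x. Gfun \<epsilon> k1 k2 x y)"
  proof (rule hg_cong)
    fix x assume x: "x \<in> Bzero \<epsilon>"
    show "2 / (k1 + 1) * (Lg y x + cc2 * SS2 B1b x - contrast k2 * SS2 Bhb x) = Gfun \<epsilon> k1 k2 x y"
      by (rule c2_eq0[OF x gfam_summable[OF f1 x] gfam_summable[OF fB x], symmetric])
  qed
  then show ?thesis .
qed

lemma c2_harm_Btwo: "hg (Btwo \<epsilon>) (\<lambda>x. Gfun \<epsilon> k1 k2 x y)"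
proof -
  have oB: "open (Btwo \<epsilon>)" by (simp add: Btwo_eq)
  have f1: "gfam (Btwo \<epsilon>) cc2 B1b" by (rule FB1[OF e c2_y(1) oB _ c2_cc]) (use Btwo_props[OF e] in auto)
  have "\<exists>H. hgrad (Btwo \<epsilon>) (\<lambda>x. Lg y x) H" by (rule SL[OF oB]) (use disj_facts(9)[OF e] y in blast)
  then have hL: "hg (Btwo \<epsilon>) (\<lambda>x. Lg y x)" unfolding hg_def .
  have "hg (Btwo \<epsilon>) (\<lambda>x. 4 / ((k1 + 1) * (k2 + 1)) * (Lg y x + cc2 * SS2 B1b x))"
    by (intro hg_cmult hg_add hL hg_gfam f1)
  then have "hg (Btwo \<epsilon>) (\<lambda>x. Gfun \<epsilon> k1 k2 x y)"
  proof (rule hg_cong)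
    fix x assume x: "x \<in> Btwo \<epsilon>"
    show "4 / ((k1 + 1) * (k2 + 1)) * (Lg y x + cc2 * SS2 B1b x) = Gfun \<epsilon> k1 k2 x y"
      by (rule c2_eq2[OF disj_facts(6)[OF e x] gfam_summable[OF f1 x], symmetric])
  qed
  then show ?thesis .
qed

lemma c2_trans1:
  assumes x0: "x0 \<in> sphere (cen1 \<epsilon>) 1"
  shows "tdat \<epsilon> (cen1 \<epsilon>) x0 (\<lambda>x. Gfun \<epsilon> k1 k2 x y) k1"
proof -
  have x0': "cmod (x0 - complex_of_real (a0 \<epsilon>)) = 1" using x0 sphere1_iff by blast
  define N where "N = Nset \<epsilon> y"
  have yne: "cmod (y - complex_of_real (a0 \<epsilon>)) \<noteq> 1" using c2_y by simp
  have x0N: "x0 \<in> N" using x0_in_Nset[OF e x0' yne] N_def by simp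
  have oN: "open N" unfolding N_def by (rule open_Nset)
  have sub: "N \<subseteq> Om1 \<epsilon>" using Nset_props unfolding N_def by blast
  have fB: "gfam N cc2 Bhb" by (rule FBhat[OF e c2_y(1) oN sub c2_cc])
  have f1: "gfam N cc2 B1b" by (rule FB1[OF e c2_y(1) oN _ c2_cc]) (use Nset_props in \<open>auto simp: N_def\<close>)
  have "\<exists>H. hgrad N (\<lambda>x. Lg y x) H" by (rule SL[OF oN]) (use Nset_props in \<open>auto simp: N_def\<close>)
  then have hL: "hg N (Lg y)" unfolding hg_def by simp
  have "\<exists>H. hgrad N (\<lambda>x. Lg y (Phi1 \<epsilon> x)) H" by (rule SLPhi[OF oN]) (use Nset_props in \<open>auto simp: N_def\<close>)
  then have hP: "hg N (\<lambda>x. Lg y (Phi1 \<epsilon> x))" unfolding hg_def .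
  have hs: "hg N (SS2 B1b)" "hg N (SS2 Bhb)" using hg_gfam[OF f1] hg_gfam[OF fB] by auto
  define F0 where "F0 = (\<lambda>x. 2 / (k1 + 1) * (Lg y x + cc2 * SS2 B1b x - contrast k2 * SS2 Bhb x))"
  define F1 where "F1 = (\<lambda>x. 1 / k1 * (Lg y x + contrast k1 * Lg y (Phi1 \<epsilon> x)) - 4 * contrast k2 / (k1 + 1)^2 * SS2 Bhb x)"
  have hF0: "hg N F0" unfolding F0_def by (intro hg_cmult hg_add hg_diff hL hs)
  have hF1: "hg N F1" unfolding F1_def by (intro hg_cmult hg_add hg_diff hL hs hP)
  have cen: "cen1 \<epsilon> = complex_of_real (a0 \<epsilon>)" by (simp add: cen1_def)
  define n where "n = x0 - complex_of_real (a0 \<epsilon>)"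
  have B1h: "B1b m x0 = Bhb m x0" for m by (simp add: funpow_swap1 Tm2_sphere[OF x0'])
  have SB1: "SS2 B1b x0 = SS2 Bhb x0" by (simp only: B1h)
  show ?thesis
  proof (rule tdat_intro[OF oN x0N hF0 hF1])
    show "Gfun \<epsilon> k1 k2 x y = F0 x" if "x \<in> N" "x \<in> Bzero \<epsilon>" for x
      unfolding F0_def by (rule c2_eq0[OF that(2) gfam_summable[OF f1 that(1)] gfam_summable[OF fB that(1)]])
    show "Gfun \<epsilon> k1 k2 x y = F1 x" if "x \<in> N" "x \<in> ball (cen1 \<epsilon>) 1" for x
    proof -
      have "x \<in> closure (Bone \<epsilon>)" using that ball_cen1 disj_facts(5)[OF e] by metis
      then show ?thesis unfolding F1_def by (rule GB1_one[OF e y])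
    qed
    show "cmod (x0 - cen1 \<epsilon>) = 1" using x0' by (simp add: cen)
    show "F0 x0 = F1 x0"
      unfolding F0_def F1_def SB1 Phi1_sphere[OF x0'] by (rule alg_val2[OF k1])
    have pBh: "pd n (SS2 Bhb) x0 = (\<Sum>m. cc2^m * pd n (Bhb m) x0)" "summable (\<lambda>m. cc2^m * pd n (Bhb m) x0)"
      using gfam_pd[OF fB x0N, of n] by auto
    have pB1e: "pd n (B1b m) x0 = - pd n (Bhb m) x0" for m
    proof -
      have "pd n (B1b m) x0 = pd n (\<lambda>x. Bhb m (Phi1 \<epsilon> x)) x0" by (subst B1_refl) simp
      also have "\<dots> = - pd n (Bhb m) x0"
        unfolding n_def by (rule pd_refl_hg[OF hg_gfam_term[OF fB] x0N x0'])
      finally show ?thesis .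
    qed
    have pB1: "pd n (SS2 B1b) x0 = - pd n (SS2 Bhb) x0"
      using gfam_pd(1)[OF f1 x0N, of n] suminf_neg_pd(1)[OF pBh(2) pB1e] pBh(1) by simp
    have pP: "pd n (\<lambda>x. Lg y (Phi1 \<epsilon> x)) x0 = - pd n (Lg y) x0"
      unfolding n_def by (rule pd_refl_hg[OF hL x0N x0'])
    have pF0: "pd n F0 x0 = 2 / (k1 + 1) * (pd n (Lg y) x0 + cc2 * pd n (SS2 B1b) x0 - contrast k2 * pd n (SS2 Bhb) x0)"
      unfolding F0_def using pd_lin3[OF hL hs(1) hs(2) x0N, of n "2 / (k1 + 1)" cc2 "contrast k2"] by simp
    have pF1: "pd n F1 x0 = 1 / k1 * (pd n (Lg y) x0 + contrast k1 * pd n (\<lambda>x. Lg y (Phi1 \<epsilon> x)) x0)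
        - 4 * contrast k2 / (k1 + 1)^2 * pd n (SS2 Bhb) x0"
      unfolding F1_def using pd_lin_b[OF hL hP hs(2) x0N, of n "1 / k1" "contrast k1" "4 * contrast k2 / (k1 + 1)^2"]
      by simp
    show "pd (x0 - cen1 \<epsilon>) F0 x0 = k1 * pd (x0 - cen1 \<epsilon>) F1 x0"
      unfolding cen n_def[symmetric] pF0 pF1 pB1 pP
      by (rule alg_flux2[OF k1])
  qed
qed

end


lemma pd_lin2:
  assumes "hg U g" "hg U f1" "z \<in> U"
  shows "pd v (\<lambda>x. b * (g x + a1 * f1 x)) z = b * (pd v g z + a1 * pd v f1 z)"
proof -
  have h1: "hg U (\<lambda>x. a1 * f1 x)" using assms by (auto intro: hg_cmult)
  have h2: "hg U (\<lambda>x. g x + a1 * f1 x)" using h1 assms by (intro hg_add)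
  show ?thesis
    using pd_cmult[OF h2 assms(3)] pd_add[OF assms(1) h1 assms(3)] pd_cmult[OF assms(2,3)] by simp
qed

lemma alg_val3:
  fixes L A C k1 k2 :: real
  assumes k1: "k1 > 0" and k2: "k2 > 0"
  shows "2 / (k2 + 1) * (L + C * A - contrast k1 * (L + C * A)) = 4 / ((k1 + 1) * (k2 + 1)) * (L + C * A)"
proof -
  have gen: "b * (X - a * X) = b * (1 - a) * X" for b X a :: real by (simp add: algebra_simps)
  have "2 / (k2 + 1) * (L + C * A - contrast k1 * (L + C * A)) = 2 / (k2 + 1) * (1 - contrast k1) * (L + C * A)"
    by (rule gen)
  also have "2 / (k2 + 1) * (1 - contrast k1) = 4 / ((k1 + 1) * (k2 + 1))"
    using k1 k2 by (simp add: contrast_def field_simps)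
  finally show ?thesis .
qed

lemma alg_flux3:
  fixes P A C k1 k2 :: real
  assumes k1: "k1 > 0" and k2: "k2 > 0"
  shows "2 / (k2 + 1) * (P + C * A - contrast k1 * (- (P + C * A))) = k1 * (4 / ((k1 + 1) * (k2 + 1)) * (P + C * A))"
proof -
  have gen: "b * (X - a * (- X)) = b * (1 + a) * X" for b X a :: real by (simp add: algebra_simps)
  have "2 / (k2 + 1) * (P + C * A - contrast k1 * (- (P + C * A))) = 2 / (k2 + 1) * (1 + contrast k1) * (P + C * A)"
    by (rule gen)
  also have "2 / (k2 + 1) * (1 + contrast k1) = k1 * (4 / ((k1 + 1) * (k2 + 1)))"
    using k1 k2 by (simp add: contrast_def field_simps)
  finally show ?thesis by simp
qed

context
  fixes \<epsilon> k1 k2 :: real and y :: complex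
  assumes e: "\<epsilon> > 0" and k1: "k1 > 0" and k2: "k2 > 0" and y: "y \<in> Btwo \<epsilon>"
begin

abbreviation "cc3 \<equiv> contrast k1 * contrast k2"
abbreviation "A1c \<equiv> \<lambda>m x. Lg y ((Tm1 \<epsilon> ^^ Suc m) x)"
abbreviation "Ahc \<equiv> \<lambda>l x. Lg y ((Tm1 \<epsilon> ^^ l) (Phi1 \<epsilon> x))"
abbreviation "SS3 \<equiv> \<lambda>\<phi> x. \<Sum>l. cc3^l * \<phi> l x"

lemma c3_y: "1 < cmod (y - complex_of_real (a0 \<epsilon>))"
  using sep2[OF e, of y 1] a0_gt[OF e] y by (auto simp: mem_Btwo)

lemma c3_cc: "\<bar>cc3\<bar> < 1" using c_abs[OF k1 k2] .

lemma c3_sumA: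
  assumes s: "summable (\<lambda>m. cc3^m * A1c m x)"
  shows "(\<Sum>l. cc3^l * Lg y ((Tm1 \<epsilon> ^^ l) x)) = Lg y x + cc3 * SS3 A1c x"
    "summable (\<lambda>l. cc3^l * Lg y ((Tm1 \<epsilon> ^^ l) x))"
  using sum_head[of cc3 "\<lambda>l. Lg y ((Tm1 \<epsilon> ^^ l) x)"] sum_head_summable[of cc3 "\<lambda>l. Lg y ((Tm1 \<epsilon> ^^ l) x)"] s
  by simp_all

lemma c3_trans1:
  assumes x0: "x0 \<in> sphere (cen1 \<epsilon>) 1"
  shows "tdat \<epsilon> (cen1 \<epsilon>) x0 (\<lambda>x. Gfun \<epsilon> k1 k2 x y) k1"
proof -
  have x0': "cmod (x0 - complex_of_real (a0 \<epsilon>)) = 1" using x0 sphere1_iff by blast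
  define N where "N = Nset \<epsilon> y"
  have yne: "cmod (y - complex_of_real (a0 \<epsilon>)) \<noteq> 1" using c3_y by simp
  have x0N: "x0 \<in> N" using x0_in_Nset[OF e x0' yne] N_def by simp
  have oN: "open N" unfolding N_def by (rule open_Nset)
  have sub: "N \<subseteq> Om1 \<epsilon>" using Nset_props unfolding N_def by blast
  have fA: "gfam N cc3 A1c" by (rule FA1[OF e c3_y oN sub c3_cc])
  have fAh: "gfam N cc3 Ahc" by (rule FAhat[OF e c3_y oN _ c3_cc]) (use Nset_props in \<open>auto simp: N_def\<close>)
  have "\<exists>H. hgrad N (\<lambda>x. Lg y x) H" by (rule SL[OF oN]) (use Nset_props in \<open>auto simp: N_def\<close>)
  then have hL: "hg N (Lg y)" unfolding hg_def by simp
  have hs: "hg N (SS3 A1c)" "hg N (SS3 Ahc)" using hg_gfam[OF fA] hg_gfam[OF fAh] by auto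
  define F0 where "F0 = (\<lambda>x. 2 / (k2 + 1) * (Lg y x + cc3 * SS3 A1c x - contrast k1 * SS3 Ahc x))"
  define F1 where "F1 = (\<lambda>x. 4 / ((k1 + 1) * (k2 + 1)) * (Lg y x + cc3 * SS3 A1c x))"
  have hF0: "hg N F0" unfolding F0_def by (intro hg_cmult hg_add hg_diff hL hs)
  have hF1: "hg N F1" unfolding F1_def by (intro hg_cmult hg_add hL hs)
  have cen: "cen1 \<epsilon> = complex_of_real (a0 \<epsilon>)" by (simp add: cen1_def)
  define n where "n = x0 - complex_of_real (a0 \<epsilon>)"
  have sA: "summable (\<lambda>m. cc3^m * A1c m x0)" using gfam_summable[OF fA x0N] .
  have Ah0: "Ahc l x0 = Lg y ((Tm1 \<epsilon> ^^ l) x0)" for l by (simp add: Phi1_sphere[OF x0'])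
  have SAh: "SS3 Ahc x0 = Lg y x0 + cc3 * SS3 A1c x0"
    using c3_sumA(1)[OF sA] by (simp add: Ah0)
  show ?thesis
  proof (rule tdat_intro[OF oN x0N hF0 hF1])
    show "Gfun \<epsilon> k1 k2 x y = F0 x" if "x \<in> N" "x \<in> Bzero \<epsilon>" for x
    proof -
      have s1: "summable (\<lambda>m. cc3^m * A1c m x)" using gfam_summable[OF fA that(1)] .
      have s2: "summable (\<lambda>l. cc3^l * Ahc l x)" using gfam_summable[OF fAh that(1)] .
      show ?thesis unfolding F0_def
        using GB2_zero[OF e y that(2), of k1 k2] sum2[OF c3_sumA(2)[OF s1] s2, of "contrast k1"] c3_sumA(1)[OF s1]
        by simp
    qed
    show "Gfun \<epsilon> k1 k2 x y = F1 x" if "x \<in> N" "x \<in> ball (cen1 \<epsilon>) 1" for x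
    proof -
      have "x \<in> closure (Bone \<epsilon>)" using that ball_cen1 disj_facts(5)[OF e] by metis
      then show ?thesis unfolding F1_def
        using GB2_one[OF e y, of x k1 k2] c3_sumA(1)[OF gfam_summable[OF fA that(1)]] by simp
    qed
    show "cmod (x0 - cen1 \<epsilon>) = 1" using x0' by (simp add: cen)
    show "F0 x0 = F1 x0"
      unfolding F0_def F1_def SAh by (rule alg_val3[OF k1 k2])
    have pA: "pd n (SS3 A1c) x0 = (\<Sum>m. cc3^m * pd n (A1c m) x0)" "summable (\<lambda>m. cc3^m * pd n (A1c m) x0)"
      using gfam_pd[OF fA x0N, of n] by auto
    have pAhe: "pd n (Ahc l) x0 = - pd n (\<lambda>x. Lg y ((Tm1 \<epsilon> ^^ l) x)) x0" for l
    proof -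
      have hl: "hg N (\<lambda>x. Lg y ((Tm1 \<epsilon> ^^ l) x))"
      proof (cases l)
        case 0 then show ?thesis using hL by simp
      next
        case (Suc m) then show ?thesis using hg_gfam_term[OF fA, of m] by simp
      qed
      show ?thesis unfolding n_def by (rule pd_refl_hg[OF hl x0N x0'])
    qed
    have pAh: "pd n (SS3 Ahc) x0 = - (pd n (Lg y) x0 + cc3 * pd n (SS3 A1c) x0)"
    proof -
      have s: "summable (\<lambda>m. cc3^m * pd n (Ahc (Suc m)) x0)"
        by (rule suminf_neg_pd(2)[OF pA(2)]) (rule pAhe)
      have "pd n (SS3 Ahc) x0 = (\<Sum>l. cc3^l * pd n (Ahc l) x0)" using gfam_pd(1)[OF fAh x0N] .
      also have "\<dots> = pd n (Ahc 0) x0 + cc3 * (\<Sum>m. cc3^m * pd n (Ahc (Suc m)) x0)"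
        by (rule sum_head[OF s])
      also have "(\<Sum>m. cc3^m * pd n (Ahc (Suc m)) x0) = - (\<Sum>m. cc3^m * pd n (A1c m) x0)"
        by (rule suminf_neg_pd(1)[OF pA(2)]) (rule pAhe)
      finally show ?thesis using pAhe[of 0] pA(1) by simp
    qed
    have pF0: "pd n F0 x0 = 2 / (k2 + 1) * (pd n (Lg y) x0 + cc3 * pd n (SS3 A1c) x0 - contrast k1 * pd n (SS3 Ahc) x0)"
      unfolding F0_def using pd_lin3[OF hL hs(1) hs(2) x0N, of n "2 / (k2 + 1)" cc3 "contrast k1"] by simp
    have pF1: "pd n F1 x0 = 4 / ((k1 + 1) * (k2 + 1)) * (pd n (Lg y) x0 + cc3 * pd n (SS3 A1c) x0)"
      unfolding F1_def using pd_lin2[OF hL hs(1) x0N, of n "4 / ((k1 + 1) * (k2 + 1))" cc3] by simp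
    show "pd (x0 - cen1 \<epsilon>) F0 x0 = k1 * pd (x0 - cen1 \<epsilon>) F1 x0"
      unfolding cen n_def[symmetric] pF0 pF1 pAh
      by (rule alg_flux3[OF k1 k2])
  qed
qed

end


lemma hg_sym:
  assumes e: "\<epsilon> > 0" and h: "hg U (\<lambda>x. Gfun \<epsilon> k2 k1 x (- y))"
  shows "hg (uminus ` U) (\<lambda>x. Gfun \<epsilon> k1 k2 x y)"
  using hg_reflect[OF h] by (rule hg_cong) (simp add: Gfun_sym[OF e, of k1 k2 _ y])

lemma Gfun_sym_fun: "\<epsilon> > 0 \<Longrightarrow> (\<lambda>x. Gfun \<epsilon> k2 k1 (- x) (- y)) = (\<lambda>x. Gfun \<epsilon> k1 k2 x y)"
  using Gfun_sym[of \<epsilon> k1 k2] by auto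

lemma cen2_eq: "cen2 \<epsilon> = - cen1 \<epsilon>" by (simp add: cen1_def cen2_def)

lemma neg_sphere2: "x0 \<in> sphere (cen2 \<epsilon>) 1 \<Longrightarrow> - x0 \<in> sphere (cen1 \<epsilon>) 1"
  by (simp add: cen2_eq dist_norm) (metis minus_diff_eq norm_minus_cancel add.commute diff_conv_add_uminus minus_minus)

lemma ball_cen2: "ball (cen2 \<epsilon>) 1 = Btwo \<epsilon>" by (simp add: Btwo_def)

lemma neg_image_punct: "uminus ` (Bone \<epsilon> - {cen1 \<epsilon>}) = Btwo \<epsilon> - {cen2 \<epsilon>}"
proof -
  have "uminus ` (Bone \<epsilon> - {cen1 \<epsilon>}) = uminus ` Bone \<epsilon> - uminus ` {cen1 \<epsilon>}"
    by (rule image_set_diff) (simp add: inj_on_def)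
  then show ?thesis by (simp add: neg_image_Bone cen2_eq)
qed

lemma trans2:
  assumes e: "\<epsilon> > 0" and x0: "x0 \<in> sphere (cen2 \<epsilon>) 1"
    and T: "tdat \<epsilon> (cen1 \<epsilon>) (- x0) (\<lambda>x. Gfun \<epsilon> k2 k1 x (- y)) k2"
  shows "transmission \<epsilon> k1 k2 (cen2 \<epsilon>) x0 (\<lambda>x. Gfun \<epsilon> k1 k2 x y)"
proof -
  have "tdat \<epsilon> (- cen1 \<epsilon>) (- (- x0)) (\<lambda>x. Gfun \<epsilon> k2 k1 (- x) (- y)) k2"
    by (rule tdat_reflect[OF T])
  then have "tdat \<epsilon> (cen2 \<epsilon>) x0 (\<lambda>x. Gfun \<epsilon> k1 k2 x y) k2"
    by (simp add: cen2_eq[symmetric] Gfun_sym_fun[OF e])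
  then show ?thesis
    by (rule tdat_trans) (use acoef_Btwo[OF e] ball_cen2 e in auto)
qed

lemma trans1:
  assumes e: "\<epsilon> > 0" and T: "tdat \<epsilon> (cen1 \<epsilon>) x0 (\<lambda>x. Gfun \<epsilon> k1 k2 x y) k1"
  shows "transmission \<epsilon> k1 k2 (cen1 \<epsilon>) x0 (\<lambda>x. Gfun \<epsilon> k1 k2 x y)"
  by (rule tdat_trans[OF T]) (use acoef_Bone ball_cen1 e in auto)

theorem lemma2p1:
  fixes \<epsilon> k1 k2 :: real and y :: complex
  assumes "\<epsilon> > 0" and "k1 > 0" and "k2 > 0"
  shows "(y \<in> Bzero \<epsilon> \<longrightarrow>
           harmonic_on (Bone \<epsilon> \<union> Btwo \<epsilon>) (\<lambda>x. Gfun \<epsilon> k1 k2 x y) \<and>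
           harmonic_on (Bzero \<epsilon>) (\<lambda>x. Gfun \<epsilon> k1 k2 x y - ln (cmod (x - y))))
     \<and> (y \<in> Bone \<epsilon> \<longrightarrow>
           harmonic_on (Bzero \<epsilon> \<union> Btwo \<epsilon>) (\<lambda>x. Gfun \<epsilon> k1 k2 x y) \<and>
           harmonic_on (Bone \<epsilon> - {cen1 \<epsilon>}) (\<lambda>x. Gfun \<epsilon> k1 k2 x y - 1 / k1 * ln (cmod (x - y))))
     \<and> (y \<in> Btwo \<epsilon> \<longrightarrow>
           harmonic_on (Bzero \<epsilon> \<union> Bone \<epsilon>) (\<lambda>x. Gfun \<epsilon> k1 k2 x y) \<and>
           harmonic_on (Btwo \<epsilon> - {cen2 \<epsilon>}) (\<lambda>x. Gfun \<epsilon> k1 k2 x y - 1 / k2 * ln (cmod (x - y))))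
     \<and> (y \<in> Bzero \<epsilon> \<union> Bone \<epsilon> \<union> Btwo \<epsilon> \<longrightarrow>
           (\<forall>x0\<in>sphere (cen1 \<epsilon>) 1. transmission \<epsilon> k1 k2 (cen1 \<epsilon>) x0 (\<lambda>x. Gfun \<epsilon> k1 k2 x y)) \<and>
           (\<forall>x0\<in>sphere (cen2 \<epsilon>) 1. transmission \<epsilon> k1 k2 (cen2 \<epsilon>) x0 (\<lambda>x. Gfun \<epsilon> k1 k2 x y)))"
proof -
  note e = assms(1) and k1 = assms(2) and k2 = assms(3)
  have P1: "harmonic_on (Bone \<epsilon> \<union> Btwo \<epsilon>) (\<lambda>x. Gfun \<epsilon> k1 k2 x y) \<and>
           harmonic_on (Bzero \<epsilon>) (\<lambda>x. Gfun \<epsilon> k1 k2 x y - ln (cmod (x - y)))" if y: "y \<in> Bzero \<epsilon>"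
  proof -
    have my: "- y \<in> Bzero \<epsilon>" using y neg_Bzero by blast
    have a: "hg (Bone \<epsilon>) (\<lambda>x. Gfun \<epsilon> k1 k2 x y)" by (rule c1_harm_Bone[OF e k1 k2 y])
    have b: "hg (Btwo \<epsilon>) (\<lambda>x. Gfun \<epsilon> k1 k2 x y)"
      using hg_sym[OF e c1_harm_Bone[OF e k2 k1 my]] by (simp add: neg_image_Bone)
    show ?thesis
      using harmonic_on_Un[OF hg_harmonic[OF a] hg_harmonic[OF b]] hg_harmonic[OF c1_harm_Bzero[OF e k1 k2 y]]
      by simp
  qed
  have P2: "harmonic_on (Bzero \<epsilon> \<union> Btwo \<epsilon>) (\<lambda>x. Gfun \<epsilon> k1 k2 x y) \<and>
           harmonic_on (Bone \<epsilon> - {cen1 \<epsilon>}) (\<lambda>x. Gfun \<epsilon> k1 k2 x y - 1 / k1 * ln (cmod (x - y)))" if y: "y \<in> Bone \<epsilon>"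
    using harmonic_on_Un[OF hg_harmonic[OF c2_harm_Bzero[OF e k1 k2 y]] hg_harmonic[OF c2_harm_Btwo[OF e k1 k2 y]]]
      hg_harmonic[OF c2_harm_Bone[OF e k1 k2 y]] by simp
  have P3: "harmonic_on (Bzero \<epsilon> \<union> Bone \<epsilon>) (\<lambda>x. Gfun \<epsilon> k1 k2 x y) \<and>
           harmonic_on (Btwo \<epsilon> - {cen2 \<epsilon>}) (\<lambda>x. Gfun \<epsilon> k1 k2 x y - 1 / k2 * ln (cmod (x - y)))" if y: "y \<in> Btwo \<epsilon>"
  proof -
    have my: "- y \<in> Bone \<epsilon>" using y neg_Bone by blast
    have a: "hg (Bzero \<epsilon>) (\<lambda>x. Gfun \<epsilon> k1 k2 x y)"
      using hg_sym[OF e c2_harm_Bzero[OF e k2 k1 my]] by (simp add: neg_image_Bzero)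
    have b: "hg (Bone \<epsilon>) (\<lambda>x. Gfun \<epsilon> k1 k2 x y)"
      using hg_sym[OF e c2_harm_Btwo[OF e k2 k1 my]] by (simp add: neg_image_Btwo)
    have c: "hg (Btwo \<epsilon> - {cen2 \<epsilon>}) (\<lambda>x. Gfun \<epsilon> k1 k2 x y - 1 / k2 * ln (cmod (x - y)))"
    proof -
      have "hg (uminus ` (Bone \<epsilon> - {cen1 \<epsilon>})) (\<lambda>x. Gfun \<epsilon> k2 k1 (- x) (- y) - 1 / k2 * ln (cmod (- x - - y)))"
        using hg_reflect[OF c2_harm_Bone[OF e k2 k1 my]] by simp
      then have "hg (Btwo \<epsilon> - {cen2 \<epsilon>}) (\<lambda>x. Gfun \<epsilon> k2 k1 (- x) (- y) - 1 / k2 * ln (cmod (- x - - y)))"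
        by (simp only: neg_image_punct)
      then show ?thesis
      proof (rule hg_cong)
        fix x
        have "cmod (- x - - y) = cmod (x - y)" by (simp add: norm_minus_commute)
        then show "Gfun \<epsilon> k2 k1 (- x) (- y) - 1 / k2 * ln (cmod (- x - - y)) = Gfun \<epsilon> k1 k2 x y - 1 / k2 * ln (cmod (x - y))"
          by (simp add: Gfun_sym[OF e, of k1 k2 x y])
      qed
    qed
    show ?thesis
      using harmonic_on_Un[OF hg_harmonic[OF a] hg_harmonic[OF b]] hg_harmonic[OF c] by simp
  qed
  have P4: "(\<forall>x0\<in>sphere (cen1 \<epsilon>) 1. transmission \<epsilon> k1 k2 (cen1 \<epsilon>) x0 (\<lambda>x. Gfun \<epsilon> k1 k2 x y)) \<and>
           (\<forall>x0\<in>sphere (cen2 \<epsilon>) 1. transmission \<epsilon> k1 k2 (cen2 \<epsilon>) x0 (\<lambda>x. Gfun \<epsilon> k1 k2 x y))"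
    if y: "y \<in> Bzero \<epsilon> \<union> Bone \<epsilon> \<union> Btwo \<epsilon>"
  proof (intro conjI ballI)
    fix x0 assume x0: "x0 \<in> sphere (cen1 \<epsilon>) 1"
    show "transmission \<epsilon> k1 k2 (cen1 \<epsilon>) x0 (\<lambda>x. Gfun \<epsilon> k1 k2 x y)"
    proof (rule trans1[OF e])
      consider "y \<in> Bzero \<epsilon>" | "y \<in> Bone \<epsilon>" | "y \<in> Btwo \<epsilon>" using y by blast
      then show "tdat \<epsilon> (cen1 \<epsilon>) x0 (\<lambda>x. Gfun \<epsilon> k1 k2 x y) k1"
      proof cases
        case 1 show ?thesis using c1_trans1[OF e k1 k2 1 x0] .
      next
        case 2 show ?thesis using c2_trans1[OF e k1 k2 2 x0] .
      next
        case 3 show ?thesis using c3_trans1[OF e k1 k2 3 x0] .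
      qed
    qed
  next
    fix x0 assume x0: "x0 \<in> sphere (cen2 \<epsilon>) 1"
    have mx0: "- x0 \<in> sphere (cen1 \<epsilon>) 1" by (rule neg_sphere2[OF x0])
    show "transmission \<epsilon> k1 k2 (cen2 \<epsilon>) x0 (\<lambda>x. Gfun \<epsilon> k1 k2 x y)"
    proof (rule trans2[OF e x0])
      consider "y \<in> Bzero \<epsilon>" | "y \<in> Bone \<epsilon>" | "y \<in> Btwo \<epsilon>" using y by blast
      then show "tdat \<epsilon> (cen1 \<epsilon>) (- x0) (\<lambda>x. Gfun \<epsilon> k2 k1 x (- y)) k2"
      proof cases
        case 1 then have "- y \<in> Bzero \<epsilon>" using neg_Bzero by blast
        then show ?thesis using c1_trans1[OF e k2 k1 _ mx0] by blast
      next
        case 2 then have "- y \<in> Btwo \<epsilon>" using neg_Btwo by blast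
        then show ?thesis using c3_trans1[OF e k2 k1 _ mx0] by blast
      next
        case 3 then have "- y \<in> Bone \<epsilon>" using neg_Bone by blast
        then show ?thesis using c2_trans1[OF e k2 k1 _ mx0] by blast
      qed
    qed
  qed
  show ?thesis using P1 P2 P3 P4 by blast
qed

end
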